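(* Let $\rho>e^q$, $0<T<T_{\max}$ and let $(A_t)$ be a Delaunay residue family. There exist $e^q<R<\rho$ and $0<T'<T$ such that for all $t\in(-T',T')$, $A_t=H_tD_tH_t^{-1}$ with $H_t\in\Lambda\mathrm{SU}(2)_R$, $D_t$ diagonal and $iD_t\in\Lambda\mathfrak{su}(2)_R$. Moreover $H_t$ and $D_t$ depend smoothly on $t$.
   Context: Fix $H>1$, $q=\operatorname{arcoth}H$. For $\rho>1$ and a matrix group or algebra $G$, $\Lambda G_\rho$ is the set of smooth maps $f:\mathbb S^1\to G$ whose Fourier expansion $f=\sum_{i}f_i\lambda^i$ satisfies $\|f\|_\rho=\sum_i|f_i|\rho^{|i|}<\infty$ (Frobenius norm $|\cdot|$). For $r,s\in\mathbb R$ let $A_{r,s}(\lambda)=\begin{pmatrix}0&r\lambda^{-1}+s\\ r\lambda+s&0\end{pmatrix}$ and $T_{\max}=\frac{\tanh(q/2)}{2}$. A Delaunay residue family is $A_t=A_{r(t),s(t)}$ where $r,s$ are continuous real functions of $t<T_{\max}$ with $r^2+s^2+2rs\cosh q=\frac14$ and $4rs\sinh q=t$, and either $(r(0),s(0))=(\frac12,0)$, $r>s$ (spherical family) or $(r(0),s(0))=(0,\frac12)$, $r<s$ (catenoidal family). *)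

theory Defs
  imports "HOL-Analysis.Analysis"
begin

definition arcoth :: "real \<Rightarrow> real" where
  "arcoth x = ln ((x + 1) / (x - 1)) / 2"

definition Tmax :: "real \<Rightarrow> real" where
  "Tmax q = tanh (q / 2) / 2"

type_synonym mat2 = "complex^2^2"

text \<open>A loop is represented by its Fourier coefficients f_i (i ranging over the integers).\<close>
type_synonym loop = "int \<Rightarrow> mat2"

definition loop_eval :: "loop \<Rightarrow> complex \<Rightarrow> mat2" where
  "loop_eval f z = (\<chi> a b. (\<Sum>\<^sub>\<infinity>i. (f i $ a $ b) * z powi i))"

definition rho_norm :: "real \<Rightarrow> loop \<Rightarrow> real" where
  "rho_norm R f = (\<Sum>\<^sub>\<infinity>i. norm (f i) * R ^ nat \<bar>i\<bar>)"

definition in_Lambda :: "real \<Rightarrow> loop \<Rightarrow> bool" where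
  "in_Lambda R f \<longleftrightarrow> (\<lambda>i. norm (f i) * R ^ nat \<bar>i\<bar>) summable_on UNIV"

definition adjoint2 :: "mat2 \<Rightarrow> mat2" where
  "adjoint2 M = (\<chi> a b. cnj (M $ b $ a))"

definition SU2 :: "mat2 set" where
  "SU2 = {M. M ** adjoint2 M = mat 1 \<and> det M = 1}"

definition su2 :: "mat2 set" where
  "su2 = {X. X + adjoint2 X = 0 \<and> trace X = 0}"

definition is_diagonal :: "mat2 \<Rightarrow> bool" where
  "is_diagonal M \<longleftrightarrow> (\<forall>a b. a \<noteq> b \<longrightarrow> M $ a $ b = 0)"

definition LambdaSU2 :: "real \<Rightarrow> loop set" where
  "LambdaSU2 R = {f. in_Lambda R f \<and> (\<forall>z. cmod z = 1 \<longrightarrow> loop_eval f z \<in> SU2)}"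

definition Lambdasu2 :: "real \<Rightarrow> loop set" where
  "Lambdasu2 R = {f. in_Lambda R f \<and> (\<forall>z. cmod z = 1 \<longrightarrow> loop_eval f z \<in> su2)}"

definition A_rs :: "real \<Rightarrow> real \<Rightarrow> complex \<Rightarrow> mat2" where
  "A_rs r s z = (\<chi> a b. if a = 1 \<and> b = 2 then of_real r * inverse z + of_real s
                        else if a = 2 \<and> b = 1 then of_real r * z + of_real s else 0)"

definition delaunay_residue_family :: "real \<Rightarrow> (real \<Rightarrow> real) \<Rightarrow> (real \<Rightarrow> real) \<Rightarrow> bool" where
  "delaunay_residue_family q r s \<longleftrightarrow>
     continuous_on {..<Tmax q} r \<and> continuous_on {..<Tmax q} s \<and>
     (\<forall>t < Tmax q. (r t)\<^sup>2 + (s t)\<^sup>2 + 2 * r t * s t * cosh q = 1/4 \<and> 4 * r t * s t * sinh q = t) \<and>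
     ((r 0 = 1/2 \<and> s 0 = 0 \<and> (\<forall>t < Tmax q. r t > s t)) \<or>
      (r 0 = 0 \<and> s 0 = 1/2 \<and> (\<forall>t < Tmax q. r t < s t)))"

definition loop_has_deriv :: "real \<Rightarrow> (real \<Rightarrow> loop) \<Rightarrow> (real \<Rightarrow> loop) \<Rightarrow> real \<Rightarrow> bool" where
  "loop_has_deriv R F F' t \<longleftrightarrow>
     ((\<lambda>h. rho_norm R (\<lambda>i. (1 / h) *\<^sub>R (F (t + h) i - F t i) - F' t i)) \<longlongrightarrow> 0) (at 0)"

definition loop_smooth_on :: "real \<Rightarrow> real set \<Rightarrow> (real \<Rightarrow> loop) \<Rightarrow> bool" where
  "loop_smooth_on R I F \<longleftrightarrow>
     (\<exists>Fs :: nat \<Rightarrow> real \<Rightarrow> loop. (\<forall>t\<in>I. Fs 0 t = F t) \<and>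
        (\<forall>k. \<forall>t\<in>I. in_Lambda R (Fs k t) \<and> loop_has_deriv R (Fs k) (Fs (Suc k)) t))"

end

theory Submission
  imports Defs
begin

definition Ev :: "(nat \<Rightarrow> int \<Rightarrow> complex) \<Rightarrow> real \<Rightarrow> int \<Rightarrow> complex" where
  "Ev C t i = (\<Sum>\<^sub>\<infinity>n. complex_of_real t ^ n * C n i)"

definition Good :: "real \<Rightarrow> (nat \<Rightarrow> int \<Rightarrow> complex) \<Rightarrow> real \<Rightarrow> bool" where
  "Good R C d \<longleftrightarrow> (\<forall>\<rho>. 0 \<le> \<rho> \<and> \<rho> < d \<longrightarrow>
      (\<lambda>(n,i). norm (C n i) * R ^ nat \<bar>i\<bar> * \<rho> ^ n) summable_on UNIV)"

definition dC :: "(nat \<Rightarrow> int \<Rightarrow> complex) \<Rightarrow> nat \<Rightarrow> int \<Rightarrow> complex" where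
  "dC C n i = of_nat (Suc n) * C (Suc n) i"

definition LE :: "(int \<Rightarrow> complex) \<Rightarrow> complex \<Rightarrow> complex" where
  "LE f z = (\<Sum>\<^sub>\<infinity>i. f i * z powi i)"

definition wn :: "real \<Rightarrow> (int \<Rightarrow> complex) \<Rightarrow> real" where
  "wn R f = (\<Sum>\<^sub>\<infinity>i. norm (f i) * R ^ nat \<bar>i\<bar>)"

lemma nonneg_Sigma_facts:
  fixes f :: "nat \<times> int \<Rightarrow> real"
  assumes s: "f summable_on UNIV" and nn: "\<And>x. f x \<ge> 0"
  shows "\<And>i. (\<lambda>n. f (n,i)) summable_on UNIV"
    and "(\<lambda>i. \<Sum>\<^sub>\<infinity>n. f (n,i)) summable_on UNIV"
    and "(\<Sum>\<^sub>\<infinity>i. \<Sum>\<^sub>\<infinity>n. f (n,i)) = infsum f UNIV"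
    and "\<And>n. (\<lambda>i. f (n,i)) summable_on UNIV"
    and "(\<lambda>n. \<Sum>\<^sub>\<infinity>i. f (n,i)) summable_on UNIV"
    and "(\<Sum>\<^sub>\<infinity>n. \<Sum>\<^sub>\<infinity>i. f (n,i)) = infsum f UNIV"
proof -
  have s1: "(\<lambda>(n,i). f (n,i)) summable_on UNIV \<times> UNIV" using s by simp
  have s2: "(\<lambda>(i,n). f (n,i)) summable_on UNIV \<times> UNIV"
    using summable_on_swap[of f UNIV UNIV] s by (simp add: case_prod_unfold)
  show "\<And>n. (\<lambda>i. f (n,i)) summable_on UNIV"
    using summable_on_SigmaD1[of "\<lambda>n i. f (n,i)" UNIV "\<lambda>_. UNIV"] s1 by auto
  show "\<And>i. (\<lambda>n. f (n,i)) summable_on UNIV"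
    using summable_on_SigmaD1[of "\<lambda>i n. f (n,i)" UNIV "\<lambda>_. UNIV"] s2 by auto
  show "(\<lambda>n. \<Sum>\<^sub>\<infinity>i. f (n,i)) summable_on UNIV"
    using summable_on_Sigma_banach[of "\<lambda>n i. f (n,i)" UNIV "\<lambda>_. UNIV"] s1 by auto
  show "(\<lambda>i. \<Sum>\<^sub>\<infinity>n. f (n,i)) summable_on UNIV"
    using summable_on_Sigma_banach[of "\<lambda>i n. f (n,i)" UNIV "\<lambda>_. UNIV"] s2 by auto
  show "(\<Sum>\<^sub>\<infinity>n. \<Sum>\<^sub>\<infinity>i. f (n,i)) = infsum f UNIV"
    using infsum_Sigma'_banach[of "\<lambda>n i. f (n,i)" UNIV "\<lambda>_. UNIV"] s1 by auto
  have "(\<Sum>\<^sub>\<infinity>i. \<Sum>\<^sub>\<infinity>n. f (n,i)) = (\<Sum>\<^sub>\<infinity>(i,n)\<in>UNIV \<times> UNIV. f (n,i))"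
    using infsum_Sigma'_banach[of "\<lambda>i n. f (n,i)" UNIV "\<lambda>_. UNIV"] s2 by auto
  also have "\<dots> = infsum f UNIV"
  proof -
    have "((\<lambda>(i,n). f (n,i)) has_sum infsum f UNIV) (UNIV \<times> UNIV)"
      using has_sum_swap[where f=f and S="infsum f UNIV" and A=UNIV and B=UNIV] s by (simp add: case_prod_unfold)
    then show ?thesis by (simp add: infsumI)
  qed
  finally show "(\<Sum>\<^sub>\<infinity>i. \<Sum>\<^sub>\<infinity>n. f (n,i)) = infsum f UNIV" .
qed

lemma n_pow_bounded:
  fixes x :: real assumes "0 \<le> x" "x < 1"
  shows "\<exists>K. \<forall>n. real n * x ^ n \<le> K"
proof -
  have "(\<lambda>n. of_nat n * x ^ n) \<longlonglongrightarrow> 0"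
    using powser_times_n_limit_0[of x] assms by simp
  then have "Bseq (\<lambda>n. of_nat n * x ^ n)" by (rule convergent_imp_Bseq[OF convergentI])
  then obtain K where K: "\<And>n. norm (of_nat n * x ^ n :: real) \<le> K" by (auto simp: Bseq_def)
  have "\<forall>n. real n * x^n \<le> K" using K by (metis abs_ge_self order_trans real_norm_def)
  then show ?thesis by blast
qed

lemma n_pow_bounded2:
  fixes a b :: real assumes "0 \<le> a" "a < b"
  shows "\<exists>K. \<forall>n. real n * a ^ n \<le> K * b ^ n"
proof -
  have b: "b > 0" using assms by simp
  obtain K where K: "\<And>n. real n * (a/b) ^ n \<le> K"
    using n_pow_bounded[of "a/b"] assms b by (auto simp: field_simps)
  show ?thesis
  proof (intro exI allI)
    fix n
    have "real n * a ^ n = (real n * (a/b)^n) * b ^ n" using b by (simp add: power_divide)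
    also have "\<dots> \<le> K * b ^ n" using K[of n] b by (intro mult_right_mono) auto
    finally show "real n * a ^ n \<le> K * b ^ n" .
  qed
qed

lemma nn_pow_bounded:
  fixes a b :: real assumes "0 < a" "a < b"
  shows "\<exists>K. \<forall>n. real n * real (n - 1) * a ^ (n - 2) \<le> K * b ^ n"
proof -
  define c where "c = (a + b) / 2"
  have c: "a < c" "c < b" "0 < c" using assms unfolding c_def by auto
  obtain K1 where K1: "\<And>n. real n * a ^ n \<le> K1 * c ^ n" using n_pow_bounded2[of a c] assms c by auto
  obtain K2 where K2: "\<And>n. real n * c ^ n \<le> K2 * b ^ n" using n_pow_bounded2[of c b] assms c by auto
  have K1p: "K1 \<ge> 0" using K1[of 1] assms c by (smt (verit) mult_nonneg_nonneg zero_le_power zero_less_power mult_le_0_iff power_one_right of_nat_1)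
  show ?thesis
  proof (intro exI allI)
    fix n
    show "real n * real (n - 1) * a ^ (n - 2) \<le> (K1 * K2 / a^2) * b ^ n"
    proof (cases "n < 2")
      case True
      then have "n = 0 \<or> n = 1" by auto
      then show ?thesis using K2[of 0] by (auto simp: mult_nonneg_nonneg)
        (use K1p assms K2[of 0] in \<open>auto intro!: mult_nonneg_nonneg divide_nonneg_pos\<close>)
    next
      case False
      then have an: "a ^ n = a^2 * a ^ (n - 2)" by (metis le_add_diff_inverse not_less power_add)
      have "real n * real (n - 1) * a ^ (n - 2) \<le> real n * real n * a ^ n / a^2"
        using assms an by (simp add: field_simps mult_mono)
      also have "real n * real n * a ^ n = real n * (real n * a ^ n)" by simp
      also have "\<dots> \<le> real n * (K1 * c ^ n)" using K1[of n] by (intro mult_left_mono) auto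
      also have "\<dots> = K1 * (real n * c ^ n)" by simp
      also have "\<dots> \<le> K1 * (K2 * b ^ n)" using K2[of n] K1p by (intro mult_left_mono) auto
      finally show ?thesis using assms by (simp add: field_simps divide_right_mono)
    qed
  qed
qed

lemma GoodD: "Good R C d \<Longrightarrow> 0 \<le> \<rho> \<Longrightarrow> \<rho> < d \<Longrightarrow>
   (\<lambda>(n,i). norm (C n i) * R ^ nat \<bar>i\<bar> * \<rho> ^ n) summable_on UNIV"
  unfolding Good_def by auto

lemma Good_dC:
  assumes G: "Good R C d" and R: "R \<ge> 0"
  shows "Good R (dC C) d"
  unfolding Good_def
proof (intro allI impI)
  fix \<rho> :: real assume r: "0 \<le> \<rho> \<and> \<rho> < d"
  define \<rho>2 where "\<rho>2 = (\<rho> + d) / 2"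
  have r2: "\<rho> < \<rho>2" "\<rho>2 < d" "0 < \<rho>2" using r unfolding \<rho>2_def by auto
  obtain K where K: "\<And>n. real n * \<rho> ^ n \<le> K * \<rho>2 ^ n" using n_pow_bounded2[of \<rho> \<rho>2] r r2 by auto
  define K' where "K' = (K + 1) / \<rho>2"
  have K': "real (Suc n) * \<rho> ^ n \<le> K' * \<rho>2 ^ Suc n" for n
  proof -
    have "real (Suc n) * \<rho> ^ n = real n * \<rho> ^ n + \<rho> ^ n" by (simp add: algebra_simps)
    also have "\<dots> \<le> K * \<rho>2 ^ n + \<rho>2 ^ n" using K[of n] r r2 by (intro add_mono power_mono) auto
    also have "\<dots> = K' * \<rho>2 ^ Suc n" using r2 unfolding K'_def by (simp add: field_simps)
    finally show ?thesis .
  qed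
  define g where "g = (\<lambda>(n,i). norm (C n i) * R ^ nat \<bar>i\<bar> * \<rho>2 ^ n)"
  have gs: "g summable_on UNIV" using GoodD[OF G, of \<rho>2] r2 unfolding g_def by auto
  define h where "h = (\<lambda>(n::nat,i::int). (Suc n, i))"
  have "inj h" unfolding h_def by (auto simp: inj_def)
  have "g summable_on h ` UNIV" using gs summable_on_subset_banach by blast
  then have "(g \<circ> h) summable_on UNIV" using summable_on_reindex[OF inj_on_subset[OF \<open>inj h\<close>]] by blast
  then have s: "(\<lambda>x. K' * (g \<circ> h) x) summable_on UNIV" by (rule summable_on_cmult_right)
  show "(\<lambda>(n,i). norm (dC C n i) * R ^ nat \<bar>i\<bar> * \<rho> ^ n) summable_on UNIV"
  proof (rule summable_on_comparison_test[OF s])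
    fix x :: "nat \<times> int"
    obtain n i where x: "x = (n,i)" by fastforce
    have "norm (dC C n i) * R ^ nat \<bar>i\<bar> * \<rho> ^ n = (real (Suc n) * \<rho> ^ n) * (norm (C (Suc n) i) * R ^ nat \<bar>i\<bar>)"
    proof -
      have "norm (of_nat (Suc n) :: complex) = real (Suc n)" by (rule norm_of_nat)
      then show ?thesis unfolding dC_def by (simp add: norm_mult)
    qed
    also have "\<dots> \<le> (K' * \<rho>2 ^ Suc n) * (norm (C (Suc n) i) * R ^ nat \<bar>i\<bar>)"
      using K'[of n] R by (intro mult_right_mono) auto
    also have "\<dots> = K' * (g \<circ> h) x" unfolding g_def h_def x by simp
    finally show "(\<lambda>(n,i). norm (dC C n i) * R ^ nat \<bar>i\<bar> * \<rho> ^ n) x \<le> K' * (g \<circ> h) x" using x by simp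
    show "0 \<le> (\<lambda>(n,i). norm (dC C n i) * R ^ nat \<bar>i\<bar> * \<rho> ^ n) x" using x r R by simp
  qed
qed

lemma Good_dC_iter: "Good R C d \<Longrightarrow> R \<ge> 0 \<Longrightarrow> Good R ((dC ^^ k) C) d"
  by (induction k) (auto intro: Good_dC)

lemma Ev_facts:
  assumes G: "Good R C d" and R: "R \<ge> 1" and t: "\<bar>t\<bar> < d"
  shows "(\<lambda>n. complex_of_real t ^ n * C n i) summable_on UNIV"
    and "norm (Ev C t i) * R ^ nat \<bar>i\<bar> \<le> (\<Sum>\<^sub>\<infinity>n. norm (C n i) * R ^ nat \<bar>i\<bar> * \<bar>t\<bar> ^ n)"
    and "(\<lambda>i. norm (Ev C t i) * R ^ nat \<bar>i\<bar>) summable_on UNIV"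
    and "(\<lambda>n. norm (complex_of_real t ^ n * C n i)) summable_on UNIV"
proof -
  define W where "W = (\<lambda>(n,i). norm (C n i) * R ^ nat \<bar>i\<bar> * \<bar>t\<bar> ^ n)"
  have Ws: "W summable_on UNIV" using GoodD[OF G, of "\<bar>t\<bar>"] t unfolding W_def by auto
  have Wn: "W x \<ge> 0" for x using R unfolding W_def by (auto simp: case_prod_unfold)
  note WS = nonneg_Sigma_facts[OF Ws Wn]
  have Rp: "R ^ nat \<bar>j\<bar> \<ge> 1" for j using R by simp
  have ab: "(\<lambda>n. norm (complex_of_real t ^ n * C n j)) summable_on UNIV" for j
  proof (rule summable_on_comparison_test[OF WS(1)[of j]])
    fix n
    have "norm (complex_of_real t ^ n * C n j) = norm (C n j) * 1 * \<bar>t\<bar> ^ n" by (simp add: norm_mult norm_power)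
    also have "\<dots> \<le> norm (C n j) * R ^ nat \<bar>j\<bar> * \<bar>t\<bar> ^ n"
      using Rp[of j] by (intro mult_right_mono mult_left_mono) auto
    finally show "norm (complex_of_real t ^ n * C n j) \<le> W (n, j)" unfolding W_def by simp
  qed simp
  show "(\<lambda>n. complex_of_real t ^ n * C n i) summable_on UNIV" using ab by (rule abs_summable_summable)
  show "(\<lambda>n. norm (complex_of_real t ^ n * C n i)) summable_on UNIV" by (rule ab)
  have bnd: "norm (Ev C t j) * R ^ nat \<bar>j\<bar> \<le> (\<Sum>\<^sub>\<infinity>n. W (n,j))" for j
  proof -
    have "norm (Ev C t j) \<le> (\<Sum>\<^sub>\<infinity>n. norm (complex_of_real t ^ n * C n j))"
      unfolding Ev_def using ab[of j] by (rule norm_infsum_bound)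
    then have "norm (Ev C t j) * R ^ nat \<bar>j\<bar> \<le> (\<Sum>\<^sub>\<infinity>n. norm (complex_of_real t ^ n * C n j)) * R ^ nat \<bar>j\<bar>"
      using R by (intro mult_right_mono) auto
    also have "\<dots> = (\<Sum>\<^sub>\<infinity>n. norm (complex_of_real t ^ n * C n j) * R ^ nat \<bar>j\<bar>)"
      by (rule infsum_cmult_left'[symmetric])
    also have "\<dots> = (\<Sum>\<^sub>\<infinity>n. W (n,j))" unfolding W_def by (simp add: norm_mult norm_power mult_ac)
    finally show ?thesis .
  qed
  show "norm (Ev C t i) * R ^ nat \<bar>i\<bar> \<le> (\<Sum>\<^sub>\<infinity>n. norm (C n i) * R ^ nat \<bar>i\<bar> * \<bar>t\<bar> ^ n)"
    using bnd[of i] unfolding W_def by simp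
  show "(\<lambda>i. norm (Ev C t i) * R ^ nat \<bar>i\<bar>) summable_on UNIV"
    by (rule summable_on_comparison_test[OF WS(2)]) (use bnd R in auto)
qed

lemma has_sum_diff':
  fixes f g :: "'a \<Rightarrow> 'b::{topological_ab_group_add}"
  assumes "(f has_sum a) A" "(g has_sum b) A"
  shows "((\<lambda>x. f x - g x) has_sum (a - b)) A"
proof -
  have "((\<lambda>x. - g x) has_sum - b) A" using has_sum_uminus[where f=g and a="-b"] assms(2) by simp
  from has_sum_add[OF assms(1) this] show ?thesis by simp
qed

lemma has_sum_Suc_shift:
  fixes f :: "nat \<Rightarrow> 'a::topological_comm_monoid_add"
  assumes "f 0 = 0"
  shows "((\<lambda>n. f (Suc n)) has_sum S) UNIV \<longleftrightarrow> (f has_sum S) UNIV"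
proof -
  have "((\<lambda>n. f (Suc n)) has_sum S) UNIV \<longleftrightarrow> (f has_sum S) {0<..}"
    by (rule has_sum_reindex_bij_witness[where i="\<lambda>b. b - 1" and j=Suc]) auto
  also have "\<dots> \<longleftrightarrow> (f has_sum S) UNIV"
    by (rule has_sum_cong_neutral) (simp_all add: assms)
  finally show ?thesis .
qed

lemma Ev_has_sum:
  assumes G: "Good R C d" and R: "R \<ge> 1" and t: "\<bar>t\<bar> < d"
  shows "((\<lambda>n. complex_of_real t ^ n * C n i) has_sum Ev C t i) UNIV"
  using Ev_facts(1)[OF assms] unfolding Ev_def by (rule has_sum_infsum)

lemma Ev_dC_has_sum:
  assumes G: "Good R C d" and R: "R \<ge> 1" and t: "\<bar>t\<bar> < d"
  shows "((\<lambda>n. of_nat n * complex_of_real t ^ (n - 1) * C n i) has_sum Ev (dC C) t i) UNIV"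
proof -
  have "((\<lambda>n. complex_of_real t ^ n * dC C n i) has_sum Ev (dC C) t i) UNIV"
    by (rule Ev_has_sum[OF Good_dC[OF G] R t]) (use R in simp)
  then show ?thesis
    by (subst has_sum_Suc_shift[symmetric]) (auto simp: dC_def mult_ac)
qed

lemma Ev_deriv:
  assumes G: "Good R C d" and R: "R \<ge> 1" and t: "\<bar>t\<bar> < d"
  shows "((\<lambda>h. wn R (\<lambda>i. (1 / h) *\<^sub>R (Ev C (t + h) i - Ev C t i) - Ev (dC C) t i)) \<longlongrightarrow> 0) (at 0)"
proof -
  define \<rho>1 where "\<rho>1 = (\<bar>t\<bar> + d) / 2"
  define \<rho>2 where "\<rho>2 = (\<rho>1 + d) / 2"
  have r: "\<bar>t\<bar> < \<rho>1" "\<rho>1 < \<rho>2" "\<rho>2 < d" "0 < \<rho>1" using t unfolding \<rho>1_def \<rho>2_def by auto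
  obtain K where K: "\<And>n. real n * real (n - 1) * \<rho>1 ^ (n - 2) \<le> K * \<rho>2 ^ n"
    using nn_pow_bounded[of \<rho>1 \<rho>2] r by auto
  have K0: "K \<ge> 0" using K[of 0] by simp
  define g where "g = (\<lambda>(n,i). K * (norm (C n i) * R ^ nat \<bar>i\<bar> * \<rho>2 ^ n))"
  have gs: "g summable_on UNIV" unfolding g_def
    using summable_on_cmult_right[OF GoodD[OF G, of \<rho>2]] r by (auto simp: case_prod_unfold)
  have gn: "g x \<ge> 0" for x using K0 R r unfolding g_def by (auto simp: case_prod_unfold)
  note GS = nonneg_Sigma_facts[OF gs gn]
  define S where "S = (\<Sum>\<^sub>\<infinity>i. \<Sum>\<^sub>\<infinity>n. g (n,i))"
  have main: "wn R (\<lambda>i. (1 / h) *\<^sub>R (Ev C (t + h) i - Ev C t i) - Ev (dC C) t i) \<le> \<bar>h\<bar> * S"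
    if h: "h \<noteq> 0" "\<bar>h\<bar> < \<rho>1 - \<bar>t\<bar>" for h
  proof -
    define q where "q = (\<lambda>i. (1 / h) *\<^sub>R (Ev C (t + h) i - Ev C t i) - Ev (dC C) t i)"
    have th: "\<bar>t + h\<bar> < d" using h r by auto
    define c where "c = (\<lambda>n. ((t + h) ^ n - t ^ n) / h - real n * t ^ (n - 1))"
    have cb: "\<bar>c n\<bar> \<le> real n * real (n - 1) * \<rho>1 ^ (n - 2) * \<bar>h\<bar>" for n
      using lemma_termdiff3[of h t \<rho>1 n] h r unfolding c_def by auto
    have qi: "(q i) * R ^ nat \<bar>i\<bar> \<le> \<bar>h\<bar> * (\<Sum>\<^sub>\<infinity>n. g (n,i))" if False for i using that by simp
    have qb: "norm (q i) * R ^ nat \<bar>i\<bar> \<le> \<bar>h\<bar> * (\<Sum>\<^sub>\<infinity>n. g (n,i))" for i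
    proof -
      have A: "((\<lambda>n. complex_of_real (t+h) ^ n * C n i) has_sum Ev C (t+h) i) UNIV"
        by (rule Ev_has_sum[OF G R th])
      have B: "((\<lambda>n. complex_of_real t ^ n * C n i) has_sum Ev C t i) UNIV"
        by (rule Ev_has_sum[OF G R t])
      have F: "((\<lambda>n. of_nat n * complex_of_real t ^ (n - 1) * C n i) has_sum Ev (dC C) t i) UNIV"
        by (rule Ev_dC_has_sum[OF G R t])
      have Q: "((\<lambda>n. (1 / h) *\<^sub>R (complex_of_real (t+h) ^ n * C n i - complex_of_real t ^ n * C n i)
                 - of_nat n * complex_of_real t ^ (n - 1) * C n i) has_sum q i) UNIV"
        unfolding q_def by (intro has_sum_diff' has_sum_scaleR A B F)
      have eq: "(1 / h) *\<^sub>R (complex_of_real (t+h) ^ n * C n i - complex_of_real t ^ n * C n i)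
                 - of_nat n * complex_of_real t ^ (n - 1) * C n i = complex_of_real (c n) * C n i" for n
        unfolding c_def by (simp add: scaleR_conv_of_real field_simps)
      have Q2: "((\<lambda>n. complex_of_real (c n) * C n i * R ^ nat \<bar>i\<bar>) has_sum (q i * R ^ nat \<bar>i\<bar>)) UNIV"
        using has_sum_cmult_left[OF Q, of "R ^ nat \<bar>i\<bar>"] eq by simp
      have Gh: "((\<lambda>n. \<bar>h\<bar> * g (n,i)) has_sum (\<bar>h\<bar> * (\<Sum>\<^sub>\<infinity>n. g (n,i)))) UNIV"
        by (rule has_sum_cmult_right) (use GS(1)[of i] in simp)
      have "norm (q i * R ^ nat \<bar>i\<bar>) \<le> \<bar>h\<bar> * (\<Sum>\<^sub>\<infinity>n. g (n,i))"
      proof (rule norm_infsum_le[OF Q2 Gh])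
        fix n
        have "norm (complex_of_real (c n) * C n i * R ^ nat \<bar>i\<bar>) = \<bar>c n\<bar> * (norm (C n i) * R ^ nat \<bar>i\<bar>)"
          using R by (simp add: norm_mult norm_power)
        also have "\<dots> \<le> (real n * real (n - 1) * \<rho>1 ^ (n - 2) * \<bar>h\<bar>) * (norm (C n i) * R ^ nat \<bar>i\<bar>)"
          using cb[of n] R by (intro mult_right_mono) auto
        also have "\<dots> \<le> (K * \<rho>2 ^ n * \<bar>h\<bar>) * (norm (C n i) * R ^ nat \<bar>i\<bar>)"
          using K[of n] R by (intro mult_right_mono) auto
        also have "\<dots> = \<bar>h\<bar> * g (n,i)" unfolding g_def by (simp add: mult_ac)
        finally show "norm (complex_of_real (c n) * C n i * R ^ nat \<bar>i\<bar>) \<le> \<bar>h\<bar> * g (n,i)" .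
      qed
      then show ?thesis using R by (simp add: norm_mult norm_power)
    qed
    have s2: "(\<lambda>i. \<bar>h\<bar> * (\<Sum>\<^sub>\<infinity>n. g (n,i))) summable_on UNIV"
      by (rule summable_on_cmult_right[OF GS(2)])
    have s1: "(\<lambda>i. norm (q i) * R ^ nat \<bar>i\<bar>) summable_on UNIV"
      by (rule summable_on_comparison_test[OF s2 qb]) (use R in simp)
    have "wn R q \<le> (\<Sum>\<^sub>\<infinity>i. \<bar>h\<bar> * (\<Sum>\<^sub>\<infinity>n. g (n,i)))"
      unfolding wn_def by (rule infsum_mono[OF s1 s2 qb])
    also have "\<dots> = \<bar>h\<bar> * S" unfolding S_def by (rule infsum_cmult_right')
    finally show ?thesis unfolding q_def .
  qed
  have ev: "\<forall>\<^sub>F h in at 0. wn R (\<lambda>i. (1 / h) *\<^sub>R (Ev C (t + h) i - Ev C t i) - Ev (dC C) t i) \<le> \<bar>h\<bar> * S"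
    unfolding eventually_at using r by (intro exI[of _ "\<rho>1 - \<bar>t\<bar>"]) (auto intro!: main)
  have ev0: "\<forall>\<^sub>F h in at 0. 0 \<le> wn R (\<lambda>i. (1 / h) *\<^sub>R (Ev C (t + h) i - Ev C t i) - Ev (dC C) t i)"
    unfolding wn_def using R by (intro always_eventually allI infsum_nonneg) auto
  have lim: "((\<lambda>h::real. \<bar>h\<bar> * S) \<longlongrightarrow> 0) (at 0)"
    by (rule tendsto_eq_intros refl)+ simp
  show ?thesis by (rule tendsto_sandwich[OF ev0 ev tendsto_const lim])
qed

lemma wsum_lin_summable:
  assumes "(\<lambda>i. norm (f i) * w i) summable_on UNIV" "(\<lambda>i. norm (g i) * w i) summable_on UNIV"
    and "(\<lambda>i. norm (k i) * w i) summable_on UNIV" and w: "\<And>i. w i \<ge> 0"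
  shows "(\<lambda>i. norm ((c::real) *\<^sub>R (f i - g i) - k i) * w i) summable_on UNIV"
proof -
  have s: "(\<lambda>i. \<bar>c\<bar> * (norm (f i) * w i) + \<bar>c\<bar> * (norm (g i) * w i) + norm (k i) * w i) summable_on UNIV"
    using assms by (intro summable_on_add summable_on_cmult_right)
  show ?thesis
  proof (rule summable_on_comparison_test[OF s])
    fix i
    have "norm (c *\<^sub>R (f i - g i) - k i) \<le> \<bar>c\<bar> * norm (f i) + \<bar>c\<bar> * norm (g i) + norm (k i)"
      by (smt (verit, ccfv_SIG) norm_scaleR norm_triangle_ineq4 mult_left_mono abs_ge_zero distrib_left)
    from mult_right_mono[OF this w[of i]]
    show "norm (c *\<^sub>R (f i - g i) - k i) * w i \<le> \<bar>c\<bar> * (norm (f i) * w i) + \<bar>c\<bar> * (norm (g i) * w i) + norm (k i) * w i"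
      by (simp add: algebra_simps)
  qed (use w in simp)
qed

definition MEv :: "(2 \<Rightarrow> 2 \<Rightarrow> nat \<Rightarrow> int \<Rightarrow> complex) \<Rightarrow> real \<Rightarrow> loop" where
  "MEv E t i = (\<chi> a b. Ev (E a b) t i)"

lemma norm_vec_le_sum: "norm (x :: 'a::real_normed_vector^'n) \<le> (\<Sum>i\<in>UNIV. norm (x $ i))"
  by (simp add: norm_vec_def L2_set_le_sum)

lemma norm_mat2_le: "norm (M :: mat2) \<le> norm (M$1$1) + norm (M$1$2) + norm (M$2$1) + norm (M$2$2)"
proof -
  have "norm M \<le> norm (M$1) + norm (M$2)" using norm_vec_le_sum[of M] by (simp add: sum_2)
  also have "\<dots> \<le> (norm (M$1$1) + norm (M$1$2)) + (norm (M$2$1) + norm (M$2$2))"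
    using norm_vec_le_sum[of "M$1"] norm_vec_le_sum[of "M$2"] by (intro add_mono) (simp_all add: sum_2)
  finally show ?thesis by simp
qed

lemma MEv_in_Lambda:
  assumes G: "\<And>a b. Good R (E a b) d" and R: "R \<ge> 1" and t: "\<bar>t\<bar> < d"
  shows "in_Lambda R (MEv E t)"
proof -
  have s: "(\<lambda>i. norm (Ev (E 1 1) t i) * R ^ nat \<bar>i\<bar> + norm (Ev (E 1 2) t i) * R ^ nat \<bar>i\<bar>
        + norm (Ev (E 2 1) t i) * R ^ nat \<bar>i\<bar> + norm (Ev (E 2 2) t i) * R ^ nat \<bar>i\<bar>) summable_on UNIV"
    by (intro summable_on_add Ev_facts(3)[OF G R t])
  show ?thesis unfolding in_Lambda_def
  proof (rule summable_on_comparison_test[OF s])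
    fix i
    show "norm (MEv E t i) * R ^ nat \<bar>i\<bar> \<le> norm (Ev (E 1 1) t i) * R ^ nat \<bar>i\<bar> + norm (Ev (E 1 2) t i) * R ^ nat \<bar>i\<bar>
        + norm (Ev (E 2 1) t i) * R ^ nat \<bar>i\<bar> + norm (Ev (E 2 2) t i) * R ^ nat \<bar>i\<bar>"
      using mult_right_mono[OF norm_mat2_le[of "MEv E t i"], of "R ^ nat \<bar>i\<bar>"] R
      by (simp add: MEv_def algebra_simps)
  qed (use R in simp)
qed

lemma MEv_deriv:
  assumes G: "\<And>a b. Good R (E a b) d" and R: "R \<ge> 1" and t: "\<bar>t\<bar> < d"
  shows "loop_has_deriv R (MEv E) (MEv (\<lambda>a b. dC (E a b))) t"
proof -
  define q where "q = (\<lambda>a b h i. (1 / h) *\<^sub>R (Ev (E a b) (t + h) i - Ev (E a b) t i) - Ev (dC (E a b)) t i)"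
  have lim: "((\<lambda>h. wn R (q a b h)) \<longlongrightarrow> 0) (at 0)" for a b
    unfolding q_def by (rule Ev_deriv[OF G R t])
  have lim4: "((\<lambda>h. wn R (q 1 1 h) + wn R (q 1 2 h) + wn R (q 2 1 h) + wn R (q 2 2 h)) \<longlongrightarrow> 0) (at 0)"
    using tendsto_add[OF tendsto_add[OF tendsto_add[OF lim[of 1 1] lim[of 1 2]] lim[of 2 1]] lim[of 2 2]] by simp
  have qs: "(\<lambda>i. norm (q a b h i) * R ^ nat \<bar>i\<bar>) summable_on UNIV" if "\<bar>t + h\<bar> < d" for a b h
    unfolding q_def
    by (rule wsum_lin_summable[OF Ev_facts(3)[OF G R that] Ev_facts(3)[OF G R t] Ev_facts(3)[OF Good_dC[OF G] R t]])
      (use R in auto)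
  have main: "rho_norm R (\<lambda>i. (1 / h) *\<^sub>R (MEv E (t + h) i - MEv E t i) - MEv (\<lambda>a b. dC (E a b)) t i)
      \<le> wn R (q 1 1 h) + wn R (q 1 2 h) + wn R (q 2 1 h) + wn R (q 2 2 h)" if h: "\<bar>t + h\<bar> < d" for h
  proof -
    have eq: "(1 / h) *\<^sub>R (MEv E (t + h) i - MEv E t i) - MEv (\<lambda>a b. dC (E a b)) t i = (\<chi> a b. q a b h i)" for i
      unfolding MEv_def q_def by (simp add: vec_eq_iff)
    have S: "(\<lambda>i. norm (q 1 1 h i) * R ^ nat \<bar>i\<bar> + norm (q 1 2 h i) * R ^ nat \<bar>i\<bar>
        + norm (q 2 1 h i) * R ^ nat \<bar>i\<bar> + norm (q 2 2 h i) * R ^ nat \<bar>i\<bar>) summable_on UNIV"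
      by (intro summable_on_add qs h)
    have bd: "norm ((\<chi> a b. q a b h i) :: mat2) * R ^ nat \<bar>i\<bar> \<le> norm (q 1 1 h i) * R ^ nat \<bar>i\<bar> + norm (q 1 2 h i) * R ^ nat \<bar>i\<bar>
        + norm (q 2 1 h i) * R ^ nat \<bar>i\<bar> + norm (q 2 2 h i) * R ^ nat \<bar>i\<bar>" for i
      using mult_right_mono[OF norm_mat2_le[of "(\<chi> a b. q a b h i)"], of "R ^ nat \<bar>i\<bar>"] R
      by (simp add: algebra_simps)
    have S0: "(\<lambda>i. norm ((\<chi> a b. q a b h i) :: mat2) * R ^ nat \<bar>i\<bar>) summable_on UNIV"
      by (rule summable_on_comparison_test[OF S bd]) (use R in simp)
    have "rho_norm R (\<lambda>i. (1 / h) *\<^sub>R (MEv E (t + h) i - MEv E t i) - MEv (\<lambda>a b. dC (E a b)) t i)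
        = (\<Sum>\<^sub>\<infinity>i. norm ((\<chi> a b. q a b h i) :: mat2) * R ^ nat \<bar>i\<bar>)"
      unfolding rho_norm_def eq ..
    also have "\<dots> \<le> (\<Sum>\<^sub>\<infinity>i. norm (q 1 1 h i) * R ^ nat \<bar>i\<bar> + norm (q 1 2 h i) * R ^ nat \<bar>i\<bar>
        + norm (q 2 1 h i) * R ^ nat \<bar>i\<bar> + norm (q 2 2 h i) * R ^ nat \<bar>i\<bar>)"
      by (rule infsum_mono[OF S0 S bd])
    also have "\<dots> = wn R (q 1 1 h) + wn R (q 1 2 h) + wn R (q 2 1 h) + wn R (q 2 2 h)"
      unfolding wn_def using qs h by (subst infsum_add | intro summable_on_add | simp)+
    finally show ?thesis .
  qed
  have ev: "\<forall>\<^sub>F h in at 0. rho_norm R (\<lambda>i. (1 / h) *\<^sub>R (MEv E (t + h) i - MEv E t i) - MEv (\<lambda>a b. dC (E a b)) t i)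
      \<le> wn R (q 1 1 h) + wn R (q 1 2 h) + wn R (q 2 1 h) + wn R (q 2 2 h)"
    unfolding eventually_at using t by (intro exI[of _ "d - \<bar>t\<bar>"]) (auto intro!: main)
  have ev0: "\<forall>\<^sub>F h in at 0. 0 \<le> rho_norm R (\<lambda>i. (1 / h) *\<^sub>R (MEv E (t + h) i - MEv E t i) - MEv (\<lambda>a b. dC (E a b)) t i)"
    unfolding rho_norm_def using R by (intro always_eventually allI infsum_nonneg) auto
  show ?thesis unfolding loop_has_deriv_def
    by (rule tendsto_sandwich[OF ev0 ev tendsto_const lim4])
qed

lemma MEv_smooth:
  assumes G: "\<And>a b. Good R (E a b) d" and R: "R \<ge> 1" and T: "T \<le> d"
  shows "loop_smooth_on R {-T<..<T} (MEv E)"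
  unfolding loop_smooth_on_def
proof (intro exI[of _ "\<lambda>k. MEv (\<lambda>a b. (dC ^^ k) (E a b))"] conjI ballI allI)
  fix t assume "t \<in> {-T<..<T}"
  then have t: "\<bar>t\<bar> < d" using T by auto
  show "MEv (\<lambda>a b. (dC ^^ 0) (E a b)) t = MEv E t" by simp
  fix k
  have Gk: "\<And>a b. Good R ((dC ^^ k) (E a b)) d" using Good_dC_iter G R by auto
  show "in_Lambda R (MEv (\<lambda>a b. (dC ^^ k) (E a b)) t)" by (rule MEv_in_Lambda[OF Gk R t])
  show "loop_has_deriv R (MEv (\<lambda>a b. (dC ^^ k) (E a b))) (MEv (\<lambda>a b. (dC ^^ Suc k) (E a b))) t"
    using MEv_deriv[OF Gk R t] by simp
qed

lemma loop_eval_MEv: "loop_eval (MEv E t) z $ a $ b = LE (Ev (E a b) t) z"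
  unfolding loop_eval_def MEv_def LE_def by simp

lemma Good_add:
  assumes "Good R C1 d" "Good R C2 d" "R \<ge> 0"
  shows "Good R (\<lambda>n i. C1 n i + C2 n i) d"
  unfolding Good_def
proof (intro allI impI)
  fix \<rho> :: real assume r: "0 \<le> \<rho> \<and> \<rho> < d"
  have s: "(\<lambda>x. (\<lambda>(n,i). norm (C1 n i) * R ^ nat \<bar>i\<bar> * \<rho> ^ n) x + (\<lambda>(n,i). norm (C2 n i) * R ^ nat \<bar>i\<bar> * \<rho> ^ n) x) summable_on UNIV"
    using GoodD[OF assms(1)] GoodD[OF assms(2)] r by (intro summable_on_add) auto
  show "(\<lambda>(n,i). norm (C1 n i + C2 n i) * R ^ nat \<bar>i\<bar> * \<rho> ^ n) summable_on UNIV"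
  proof (rule summable_on_comparison_test[OF s])
    fix x :: "nat \<times> int" obtain n i where x: "x = (n,i)" by fastforce
    have "norm (C1 n i + C2 n i) * (R ^ nat \<bar>i\<bar> * \<rho> ^ n) \<le> (norm (C1 n i) + norm (C2 n i)) * (R ^ nat \<bar>i\<bar> * \<rho> ^ n)"
      using r assms(3) by (intro mult_right_mono norm_triangle_ineq) auto
    then show "(\<lambda>(n,i). norm (C1 n i + C2 n i) * R ^ nat \<bar>i\<bar> * \<rho> ^ n) x \<le> (\<lambda>(n,i). norm (C1 n i) * R ^ nat \<bar>i\<bar> * \<rho> ^ n) x + (\<lambda>(n,i). norm (C2 n i) * R ^ nat \<bar>i\<bar> * \<rho> ^ n) x"
      unfolding x by (simp add: algebra_simps)
    show "0 \<le> (\<lambda>(n,i). norm (C1 n i + C2 n i) * R ^ nat \<bar>i\<bar> * \<rho> ^ n) x" using r assms(3) x by simp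
  qed
qed

lemma Good_scale:
  assumes "Good R C d"
  shows "Good R (\<lambda>n i. k * C n i) d"
  unfolding Good_def
proof (intro allI impI)
  fix \<rho> :: real assume r: "0 \<le> \<rho> \<and> \<rho> < d"
  have "(\<lambda>x. norm k * (\<lambda>(n,i). norm (C n i) * R ^ nat \<bar>i\<bar> * \<rho> ^ n) x) summable_on UNIV"
    using GoodD[OF assms] r by (intro summable_on_cmult_right) auto
  then show "(\<lambda>(n,i). norm (k * C n i) * R ^ nat \<bar>i\<bar> * \<rho> ^ n) summable_on UNIV"
    by (simp add: norm_mult case_prod_unfold mult_ac)
qed

lemma Good_shift:
  assumes G: "Good R C d" and R: "R \<ge> 1" and m: "\<bar>m\<bar> \<le> 1"
  shows "Good R (\<lambda>n i. C n (i + m)) d"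
  unfolding Good_def
proof (intro allI impI)
  fix \<rho> :: real assume r: "0 \<le> \<rho> \<and> \<rho> < d"
  define f where "f = (\<lambda>(n,i). norm (C n i) * R ^ nat \<bar>i\<bar> * \<rho> ^ n)"
  have fs: "f summable_on UNIV" using GoodD[OF G] r unfolding f_def by auto
  have "(\<lambda>x. f ((\<lambda>(n,i). (n, i + m)) x)) summable_on UNIV \<longleftrightarrow> f summable_on UNIV"
    by (rule summable_on_reindex_bij_betw) (auto simp: bij_betw_def inj_def image_def intro!: exI[of _ "_ - m"])
  then have "(\<lambda>x. R * f ((\<lambda>(n,i). (n, i + m)) x)) summable_on UNIV"
    using fs by (intro summable_on_cmult_right) auto
  then show "(\<lambda>(n,i). norm (C n (i + m)) * R ^ nat \<bar>i\<bar> * \<rho> ^ n) summable_on UNIV"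
  proof (rule summable_on_comparison_test)
    fix x :: "nat \<times> int" obtain n i where x: "x = (n,i)" by fastforce
    have "R ^ nat \<bar>i\<bar> \<le> R ^ (Suc (nat \<bar>i + m\<bar>))" using R m by (intro power_increasing) auto
    then have Ri: "R ^ nat \<bar>i\<bar> \<le> R * R ^ nat \<bar>i + m\<bar>" by simp
    have "norm (C n (i + m)) * R ^ nat \<bar>i\<bar> * \<rho> ^ n \<le> norm (C n (i + m)) * (R * R ^ nat \<bar>i + m\<bar>) * \<rho> ^ n"
      using Ri r by (intro mult_right_mono mult_left_mono) auto
    then show "(\<lambda>(n,i). norm (C n (i + m)) * R ^ nat \<bar>i\<bar> * \<rho> ^ n) x \<le> R * f ((\<lambda>(n,i). (n, i + m)) x)"
      unfolding x f_def by (simp add: mult_ac)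
    show "0 \<le> (\<lambda>(n,i). norm (C n (i + m)) * R ^ nat \<bar>i\<bar> * \<rho> ^ n) x" using x r R by simp
  qed
qed

definition Cst :: "complex \<Rightarrow> nat \<Rightarrow> int \<Rightarrow> complex" where
  "Cst v n i = (if n = 0 \<and> i = 0 then v else 0)"

lemma Good_Cst: "Good R (Cst v) d"
  unfolding Good_def
proof (intro allI impI)
  fix \<rho> :: real
  have "{x \<in> UNIV. (\<lambda>(n,i). norm (Cst v n i) * R ^ nat \<bar>i\<bar> * \<rho> ^ n) x \<noteq> 0} \<subseteq> {(0,0)}"
    by (auto simp: Cst_def split: if_splits)
  then show "(\<lambda>(n,i). norm (Cst v n i) * R ^ nat \<bar>i\<bar> * \<rho> ^ n) summable_on UNIV"
    by (intro finite_nonzero_values_imp_summable_on) (auto intro: finite_subset)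
qed

lemma Ev_Cst: "Ev (Cst v) t i = (if i = 0 then v else 0)"
proof -
  have "((\<lambda>n. complex_of_real t ^ n * Cst v n i) has_sum (if i = 0 then v else 0)) UNIV"
    by (rule has_sum_finite_neutralI[where B="{0}"]) (auto simp: Cst_def)
  then show ?thesis unfolding Ev_def by (rule infsumI)
qed

lemma Ev_add:
  assumes "Good R C1 d" "Good R C2 d" "R \<ge> 1" "\<bar>t\<bar> < d"
  shows "Ev (\<lambda>n i. C1 n i + C2 n i) t i = Ev C1 t i + Ev C2 t i"
  unfolding Ev_def
  using infsum_add[OF Ev_facts(1)[OF assms(1,3,4)] Ev_facts(1)[OF assms(2,3,4)]]
  by (simp add: distrib_left)

lemma Ev_scale: "Ev (\<lambda>n i. k * C n i) t i = k * Ev C t i"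
  unfolding Ev_def by (simp add: mult.left_commute infsum_cmult_right')

lemma LE_summable:
  assumes G: "Good R C d" and R: "R \<ge> 1" and t: "\<bar>t\<bar> < d" and z: "norm z = 1"
  shows "(\<lambda>i. Ev C t i * z powi i) summable_on UNIV"
proof -
  have "(\<lambda>i. norm (Ev C t i * z powi i)) summable_on UNIV"
  proof (rule summable_on_comparison_test[OF Ev_facts(3)[OF G R t]])
    fix i
    have "norm (Ev C t i * z powi i) = norm (Ev C t i) * 1" using z by (simp add: norm_mult norm_power_int)
    also have "\<dots> \<le> norm (Ev C t i) * R ^ nat \<bar>i\<bar>" using R by (intro mult_left_mono) auto
    finally show "norm (Ev C t i * z powi i) \<le> norm (Ev C t i) * R ^ nat \<bar>i\<bar>" .
  qed simp
  then show ?thesis by (rule abs_summable_summable)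
qed

lemma LE_shift:
  assumes z: "z \<noteq> 0"
  shows "LE (\<lambda>i. f (i + m)) z = z powi (-m) * LE f z"
proof -
  have "LE (\<lambda>i. f (i + m)) z = (\<Sum>\<^sub>\<infinity>j. f j * z powi (j - m))"
    unfolding LE_def by (rule infsum_reindex_bij_witness[where j="\<lambda>j. j + m" and i="\<lambda>j. j - m"]) auto
  also have "\<dots> = (\<Sum>\<^sub>\<infinity>j. z powi (-m) * (f j * z powi j))"
    using z by (intro infsum_cong) (simp add: power_int_diff power_int_minus field_simps)
  also have "\<dots> = z powi (-m) * LE f z" unfolding LE_def by (rule infsum_cmult_right')
  finally show ?thesis .
qed

lemma LE_scale: "LE (\<lambda>i. k * f i) z = k * LE f z"
  unfolding LE_def by (simp add: mult.assoc infsum_cmult_right')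

lemma LE_swap:
  assumes G: "Good R C d" and R: "R \<ge> 1" and t: "\<bar>t\<bar> < d" and z: "norm z = 1"
  shows "LE (Ev C t) z = (\<Sum>\<^sub>\<infinity>n. complex_of_real t ^ n * LE (C n) z)"
proof -
  define F where "F = (\<lambda>(n,i). complex_of_real t ^ n * C n i * z powi i)"
  define W where "W = (\<lambda>(n,i). norm (C n i) * R ^ nat \<bar>i\<bar> * \<bar>t\<bar> ^ n)"
  have Ws: "W summable_on UNIV" using GoodD[OF G, of "\<bar>t\<bar>"] t unfolding W_def by auto
  have "(\<lambda>x. norm (F x)) summable_on UNIV"
  proof (rule summable_on_comparison_test[OF Ws])
    fix x :: "nat \<times> int" obtain n i where x: "x = (n,i)" by fastforce
    have "norm (F x) = norm (C n i) * 1 * \<bar>t\<bar> ^ n" using z unfolding F_def x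
      by (simp add: norm_mult norm_power norm_power_int)
    also have "\<dots> \<le> norm (C n i) * R ^ nat \<bar>i\<bar> * \<bar>t\<bar> ^ n" using R
      by (intro mult_right_mono mult_left_mono) auto
    finally show "norm (F x) \<le> W x" unfolding W_def x by simp
  qed simp
  then have Fs: "F summable_on UNIV" by (rule abs_summable_summable)
  have F1: "(\<lambda>(n,i). complex_of_real t ^ n * C n i * z powi i) summable_on UNIV \<times> UNIV" using Fs unfolding F_def by simp
  have F2: "(\<lambda>(i,n). complex_of_real t ^ n * C n i * z powi i) summable_on UNIV \<times> UNIV"
    using summable_on_swap[of F UNIV UNIV] Fs unfolding F_def by (simp add: case_prod_unfold)
  have "LE (Ev C t) z = (\<Sum>\<^sub>\<infinity>i. \<Sum>\<^sub>\<infinity>n. complex_of_real t ^ n * C n i * z powi i)"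
    unfolding LE_def Ev_def by (simp add: infsum_cmult_left')
  also have "\<dots> = (\<Sum>\<^sub>\<infinity>(i,n)\<in>UNIV \<times> UNIV. complex_of_real t ^ n * C n i * z powi i)"
    using infsum_Sigma'_banach[OF F2] by simp
  also have "\<dots> = (\<Sum>\<^sub>\<infinity>(n,i)\<in>UNIV \<times> UNIV. complex_of_real t ^ n * C n i * z powi i)"
    by (rule infsum_reindex_bij_witness[where i="\<lambda>(n,i). (i,n)" and j="\<lambda>(i,n). (n,i)"]) auto
  also have "\<dots> = (\<Sum>\<^sub>\<infinity>n. \<Sum>\<^sub>\<infinity>i. complex_of_real t ^ n * C n i * z powi i)"
    using infsum_Sigma'_banach[OF F1] by simp
  also have "\<dots> = (\<Sum>\<^sub>\<infinity>n. complex_of_real t ^ n * LE (C n) z)"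
    unfolding LE_def by (simp add: mult.assoc infsum_cmult_right')
  finally show ?thesis .
qed

lemma infsum_eq_suminf': "f summable_on (UNIV :: nat set) \<Longrightarrow> infsum f UNIV = suminf f"
  by (metis has_sum_imp_sums has_sum_infsum sums_unique)

definition cp :: "(nat \<Rightarrow> real) \<Rightarrow> (nat \<Rightarrow> int \<Rightarrow> complex) \<Rightarrow> nat \<Rightarrow> int \<Rightarrow> complex" where
  "cp b C n i = (\<Sum>k\<le>n. complex_of_real (b k) * C (n - k) i)"

lemma Good_cp:
  assumes hb: "\<And>\<rho>. 0 \<le> \<rho> \<Longrightarrow> \<rho> < d \<Longrightarrow> summable (\<lambda>k. \<bar>b k\<bar> * \<rho> ^ k)"
    and G: "Good R C d" and R: "R \<ge> 0"
  shows "Good R (cp b C) d"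
  unfolding Good_def
proof (intro allI impI)
  fix \<rho> :: real assume r: "0 \<le> \<rho> \<and> \<rho> < d"
  define u where "u = (\<lambda>k. \<bar>b k\<bar> * \<rho> ^ k)"
  define v where "v = (\<lambda>m i. norm (C m i) * R ^ nat \<bar>i\<bar> * \<rho> ^ m)"
  define w where "w = (\<lambda>(n,i). \<Sum>k\<le>n. u k * v (n - k) i)"
  have us: "summable u" unfolding u_def using hb r by auto
  have vs0: "(\<lambda>(m,i). v m i) summable_on UNIV" unfolding v_def using GoodD[OF G] r by auto
  note VS = nonneg_Sigma_facts[OF vs0[unfolded case_prod_unfold]]
  have vn: "v m i \<ge> 0" for m i unfolding v_def using R r by simp
  have un: "u k \<ge> 0" for k unfolding u_def using r by simp
  have vsi: "summable (\<lambda>m. v m i)" for i using VS(1)[OF vn, of i] by (simp add: summable_on_imp_summable)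
  have inner: "((\<lambda>n. w (n,i)) has_sum (suminf u * (\<Sum>\<^sub>\<infinity>m. v m i))) UNIV" for i
  proof -
    have "(\<lambda>n. \<Sum>k\<le>n. u k * v (n - k) i) sums (suminf u * suminf (\<lambda>m. v m i))"
      by (rule Cauchy_product_sums) (use us vsi un vn in \<open>auto simp: abs_of_nonneg\<close>)
    moreover have "suminf (\<lambda>m. v m i) = (\<Sum>\<^sub>\<infinity>m. v m i)"
      using VS(1)[OF vn, of i] by (simp add: infsum_eq_suminf')
    ultimately show ?thesis unfolding w_def
      by (intro sums_nonneg_imp_has_sum) (auto intro!: sum_nonneg mult_nonneg_nonneg un vn)
  qed
  have outer: "(\<lambda>i. suminf u * (\<Sum>\<^sub>\<infinity>m. v m i)) summable_on UNIV"
    by (intro summable_on_cmult_right) (use VS(2)[OF vn] in simp)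
  have "(\<lambda>(i,n). w (n,i)) summable_on Sigma UNIV (\<lambda>_. UNIV)"
    by (rule summable_on_SigmaI[OF _ outer]) (use inner in \<open>auto simp: w_def intro!: sum_nonneg mult_nonneg_nonneg un vn\<close>)
  then have ws: "w summable_on UNIV"
    using summable_on_swap[of "\<lambda>(i,n). w (n,i)" UNIV UNIV] by (simp add: case_prod_unfold)
  show "(\<lambda>(n,i). norm (cp b C n i) * R ^ nat \<bar>i\<bar> * \<rho> ^ n) summable_on UNIV"
  proof (rule summable_on_comparison_test[OF ws])
    fix x :: "nat \<times> int" obtain n i where x: "x = (n,i)" by fastforce
    have "norm (cp b C n i) * (R ^ nat \<bar>i\<bar> * \<rho> ^ n) \<le> (\<Sum>k\<le>n. \<bar>b k\<bar> * norm (C (n - k) i)) * (R ^ nat \<bar>i\<bar> * \<rho> ^ n)"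
      unfolding cp_def using R r
      by (intro mult_right_mono order_trans[OF norm_sum] sum_mono) (auto simp: norm_mult)
    also have "\<dots> = (\<Sum>k\<le>n. u k * v (n - k) i)"
      unfolding u_def v_def sum_distrib_right
    proof (intro sum.cong refl)
      fix k assume "k \<in> {..n}"
      then have "\<rho> ^ n = \<rho> ^ k * \<rho> ^ (n - k)" by (simp add: power_add[symmetric])
      then show "\<bar>b k\<bar> * norm (C (n - k) i) * (R ^ nat \<bar>i\<bar> * \<rho> ^ n) = \<bar>b k\<bar> * \<rho> ^ k * (norm (C (n - k) i) * R ^ nat \<bar>i\<bar> * \<rho> ^ (n - k))"
        by (simp add: mult_ac)
    qed
    finally show "(\<lambda>(n,i). norm (cp b C n i) * R ^ nat \<bar>i\<bar> * \<rho> ^ n) x \<le> w x"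
      unfolding x w_def by (simp add: mult_ac)
    show "0 \<le> (\<lambda>(n,i). norm (cp b C n i) * R ^ nat \<bar>i\<bar> * \<rho> ^ n) x" using x R r by simp
  qed
qed

lemma Ev_cp:
  assumes hb: "\<And>\<rho>. 0 \<le> \<rho> \<Longrightarrow> \<rho> < d \<Longrightarrow> summable (\<lambda>k. \<bar>b k\<bar> * \<rho> ^ k)"
    and G: "Good R C d" and R: "R \<ge> 1" and t: "\<bar>t\<bar> < d"
    and bs: "(\<lambda>k. b k * t ^ k) sums B"
  shows "Ev (cp b C) t i = complex_of_real B * Ev C t i"
proof -
  define a where "a = (\<lambda>k. complex_of_real (b k) * complex_of_real t ^ k)"
  define c where "c = (\<lambda>m. complex_of_real t ^ m * C m i)"
  have as: "summable (\<lambda>k. norm (a k))" unfolding a_def using hb[of "\<bar>t\<bar>"] t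
    by (simp add: norm_mult norm_power)
  have cs: "summable (\<lambda>k. norm (c k))" unfolding c_def using Ev_facts(4)[OF G R t]
    by (rule summable_on_imp_summable)
  have "(\<lambda>k. \<Sum>j\<le>k. a j * c (k - j)) sums (suminf a * suminf c)"
    by (rule Cauchy_product_sums[OF as cs])
  moreover have "(\<Sum>j\<le>k. a j * c (k - j)) = complex_of_real t ^ k * cp b C k i" for k
    unfolding a_def c_def cp_def sum_distrib_left
  proof (intro sum.cong refl)
    fix j assume "j \<in> {..k}"
    then have "complex_of_real t ^ k = complex_of_real t ^ j * complex_of_real t ^ (k - j)" by (simp add: power_add[symmetric])
    then show "complex_of_real (b j) * complex_of_real t ^ j * (complex_of_real t ^ (k - j) * C (k - j) i) =
        complex_of_real t ^ k * (complex_of_real (b j) * C (k - j) i)" by (simp add: mult_ac)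
  qed
  ultimately have S: "(\<lambda>k. complex_of_real t ^ k * cp b C k i) sums (suminf a * suminf c)" by simp
  have hb': "\<And>\<rho>. 0 \<le> \<rho> \<Longrightarrow> \<rho> < d \<Longrightarrow> summable (\<lambda>k. \<bar>b k\<bar> * \<rho> ^ k)" by (rule hb)
  have "Ev (cp b C) t i = suminf (\<lambda>k. complex_of_real t ^ k * cp b C k i)"
  proof -
    have Gc: "Good R (cp b C) d" using Good_cp[OF hb' G] R by simp
    show ?thesis unfolding Ev_def by (rule infsum_eq_suminf'[OF Ev_facts(1)[OF Gc R t]])
  qed
  also have "\<dots> = suminf a * suminf c" using S by (simp add: sums_iff)
  also have "suminf c = Ev C t i" unfolding c_def Ev_def by (rule infsum_eq_suminf'[OF Ev_facts(1)[OF G R t], symmetric])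
  also have "suminf a = complex_of_real B"
  proof -
    have "(\<lambda>k. complex_of_real (b k * t ^ k)) sums complex_of_real B" using bs by (simp only: sums_of_real_iff)
    then show ?thesis unfolding a_def by (simp add: sums_iff)
  qed
  finally show ?thesis .
qed

fun Pn :: "real \<Rightarrow> nat \<Rightarrow> int \<Rightarrow> complex" where
  "Pn c 0 i = (if i = 0 then 1 else 0)"
| "Pn c (Suc n) i = Pn c n (i - 1) + Pn c n (i + 1) - 2 * complex_of_real c * Pn c n i"

lemma Pn_zero: "int n < \<bar>i\<bar> \<Longrightarrow> Pn c n i = 0"
  by (induction n arbitrary: i) auto

lemma Pn_bound: "norm (Pn c n i) \<le> (2 + 2 * \<bar>c\<bar>) ^ n"
proof (induction n arbitrary: i)
  case 0 then show ?case by simp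
next
  case (Suc n)
  have "norm (Pn c (Suc n) i) \<le> norm (Pn c n (i - 1)) + norm (Pn c n (i + 1)) + 2 * \<bar>c\<bar> * norm (Pn c n i)"
  proof -
    have "norm (Pn c (Suc n) i) \<le> norm (Pn c n (i - 1) + Pn c n (i + 1)) + norm (2 * complex_of_real c * Pn c n i)"
      unfolding Pn.simps by (rule norm_triangle_ineq4)
    also have "\<dots> \<le> norm (Pn c n (i - 1)) + norm (Pn c n (i + 1)) + 2 * \<bar>c\<bar> * norm (Pn c n i)"
      by (intro add_mono norm_triangle_ineq) (simp add: norm_mult)
    finally show ?thesis .
  qed
  also have "\<dots> \<le> (2 + 2 * \<bar>c\<bar>) ^ n + (2 + 2 * \<bar>c\<bar>) ^ n + 2 * \<bar>c\<bar> * (2 + 2 * \<bar>c\<bar>) ^ n"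
    using Suc.IH by (intro add_mono mult_left_mono) auto
  also have "\<dots> = (2 + 2 * \<bar>c\<bar>) ^ Suc n" by (simp add: algebra_simps)
  finally show ?case .
qed

lemma Pn_finite: "finite {i. Pn c n i \<noteq> 0}"
proof -
  have "{i. Pn c n i \<noteq> 0} \<subseteq> {-int n..int n}" using Pn_zero[of n _ c] by force
  then show ?thesis by (rule finite_subset) simp
qed

lemma LE_fin_summable: fixes f :: "int \<Rightarrow> complex" assumes "finite {i. f i \<noteq> 0}" shows "(\<lambda>i. f i * z powi i) summable_on UNIV"
proof (rule finite_nonzero_values_imp_summable_on)
  have "{x \<in> UNIV. f x * z powi x \<noteq> 0} \<subseteq> {i. f i \<noteq> 0}" by auto
  then show "finite {x \<in> UNIV. f x * z powi x \<noteq> 0}" using assms by (rule finite_subset)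
qed

lemma LE_Pn: "z \<noteq> 0 \<Longrightarrow> LE (Pn c n) z = (z + inverse z - 2 * complex_of_real c) ^ n"
proof (induction n)
  case 0
  have "((\<lambda>i. Pn c 0 i * z powi i) has_sum 1) UNIV"
    by (rule has_sum_finite_neutralI[where B="{0}"]) auto
  then show ?case unfolding LE_def by (simp add: infsumI)
next
  case (Suc n)
  have f1: "finite {i. Pn c n (i + m) \<noteq> 0}" for m
  proof -
    have "{i. Pn c n (i + m) \<noteq> 0} = (\<lambda>i. i - m) ` {i. Pn c n i \<noteq> 0}" by (auto simp: image_def intro!: exI[of _ "_ + m"])
    then show ?thesis using Pn_finite by simp
  qed
  have s1: "(\<lambda>i. Pn c n (i + (-1)) * z powi i) summable_on UNIV" using LE_fin_summable[OF f1] by blast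
  have s2: "(\<lambda>i. Pn c n (i + 1) * z powi i) summable_on UNIV" using LE_fin_summable[OF f1] by blast
  have s3: "(\<lambda>i. 2 * complex_of_real c * (Pn c n i * z powi i)) summable_on UNIV"
    using LE_fin_summable[OF Pn_finite] by (intro summable_on_cmult_right)
  have "LE (Pn c (Suc n)) z = (\<Sum>\<^sub>\<infinity>i. Pn c n (i + (-1)) * z powi i + Pn c n (i + 1) * z powi i - 2 * complex_of_real c * (Pn c n i * z powi i))"
    unfolding LE_def by (intro infsum_cong) (simp add: algebra_simps)
  also have "\<dots> = LE (\<lambda>i. Pn c n (i + (-1))) z + LE (\<lambda>i. Pn c n (i + 1)) z - 2 * complex_of_real c * LE (Pn c n) z"
  proof -
    have "((\<lambda>i. Pn c n (i + (-1)) * z powi i + Pn c n (i + 1) * z powi i - 2 * complex_of_real c * (Pn c n i * z powi i))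
      has_sum (LE (\<lambda>i. Pn c n (i + (-1))) z + LE (\<lambda>i. Pn c n (i + 1)) z - 2 * complex_of_real c * LE (Pn c n) z)) UNIV"
      unfolding LE_def using s1 s2 s3
      using LE_fin_summable[OF Pn_finite, of c n z]
      by (intro has_sum_diff' has_sum_add has_sum_cmult_right) (auto simp: infsum_cmult_right')
    then show ?thesis by (rule infsumI)
  qed
  also have "\<dots> = z * LE (Pn c n) z + inverse z * LE (Pn c n) z - 2 * complex_of_real c * LE (Pn c n) z"
    using Suc.prems LE_shift[of z "Pn c n" "-1"] LE_shift[of z "Pn c n" 1] by (simp add: power_int_minus)
  also have "\<dots> = (z + inverse z - 2 * complex_of_real c) ^ Suc n" using Suc by (simp add: algebra_simps)
  finally show ?case .
qed

lemma binom_abs_summable: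
  fixes X :: real assumes X: "0 \<le> X" "X < 1"
  shows "summable (\<lambda>n. \<bar>e gchoose n\<bar> * X ^ n)"
    and "summable (\<lambda>n. real (2 * n + 1) * \<bar>e gchoose n\<bar> * X ^ n)"
proof -
  define X1 where "X1 = (X + 1) / 2"
  define X2 where "X2 = (X1 + 1) / 2"
  have x: "X < X1" "X1 < X2" "X2 < 1" "0 < X1" using X unfolding X1_def X2_def by auto
  have "summable (\<lambda>n. (e gchoose n) * X2 ^ n)"
    using gen_binomial_real[of X2 e] x by (auto simp: sums_iff)
  then have s1: "summable (\<lambda>n. norm ((e gchoose n) * X1 ^ n))"
    by (rule powser_insidea) (use x in auto)
  have s1': "summable (\<lambda>n. \<bar>e gchoose n\<bar> * X1 ^ n)" using s1 x by (simp add: abs_mult power_abs)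
  show "summable (\<lambda>n. \<bar>e gchoose n\<bar> * X ^ n)"
    by (rule summable_comparison_test[OF _ s1']) (use X x in \<open>auto intro!: exI[of _ 0] mult_left_mono power_mono simp: abs_mult power_abs\<close>)
  obtain K where K: "\<And>n. real n * X ^ n \<le> K * X1 ^ n" using n_pow_bounded2[of X X1] X x by auto
  have s2: "summable (\<lambda>n. (2 * K + 1) * (\<bar>e gchoose n\<bar> * X1 ^ n))" using s1' by (rule summable_mult)
  show "summable (\<lambda>n. real (2 * n + 1) * \<bar>e gchoose n\<bar> * X ^ n)"
  proof (rule summable_comparison_test[OF _ s2], intro exI[of _ 0] allI impI)
    fix n :: nat
    have "real (2 * n + 1) * X ^ n = 2 * (real n * X ^ n) + X ^ n" by (simp add: algebra_simps)
    also have "\<dots> \<le> 2 * (K * X1 ^ n) + X1 ^ n" using K[of n] X x by (intro add_mono power_mono) auto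
    finally have "real (2 * n + 1) * X ^ n \<le> (2 * K + 1) * X1 ^ n" by (simp add: algebra_simps)
    then have "\<bar>e gchoose n\<bar> * (real (2 * n + 1) * X ^ n) \<le> \<bar>e gchoose n\<bar> * ((2 * K + 1) * X1 ^ n)"
      by (intro mult_left_mono) auto
    then show "norm (real (2 * n + 1) * \<bar>e gchoose n\<bar> * X ^ n) \<le> (2 * K + 1) * (\<bar>e gchoose n\<bar> * X1 ^ n)"
      using X by (simp add: abs_mult mult_ac)
  qed
qed

definition Bs :: "real \<Rightarrow> real \<Rightarrow> real \<Rightarrow> nat \<Rightarrow> int \<Rightarrow> complex" where
  "Bs e \<kappa> c n i = complex_of_real ((e gchoose n) * \<kappa> ^ n) * Pn c n i"

lemma Good_Bs:
  assumes cond: "d * \<bar>\<kappa>\<bar> * (2 + 2 * \<bar>c\<bar>) * R < 1" and R: "R \<ge> 1"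
  shows "Good R (Bs e \<kappa> c) d"
  unfolding Good_def
proof (intro allI impI)
  fix \<rho> :: real assume r: "0 \<le> \<rho> \<and> \<rho> < d"
  define B where "B = 2 + 2 * \<bar>c\<bar>"
  define X where "X = \<rho> * \<bar>\<kappa>\<bar> * B * R"
  have X: "0 \<le> X" "X < 1" unfolding X_def B_def using r R cond
    by (auto intro!: le_less_trans[OF _ cond] mult_right_mono simp: mult_nonneg_nonneg)
  define f where "f = (\<lambda>(n,i). norm (Bs e \<kappa> c n i) * R ^ nat \<bar>i\<bar> * \<rho> ^ n)"
  define g where "g = (\<lambda>n. \<Sum>i\<in>{-int n..int n}. f (n,i))"
  have fn: "f x \<ge> 0" for x unfolding f_def using r R by (auto simp: case_prod_unfold)
  have inner: "((\<lambda>i. f (n,i)) has_sum g n) UNIV" for n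
    unfolding g_def by (rule has_sum_finite_neutralI) (auto simp: f_def Bs_def Pn_zero)
  have fb: "f (n,i) \<le> \<bar>e gchoose n\<bar> * X ^ n" if "i \<in> {-int n..int n}" for n i
  proof -
    have "f (n,i) = \<bar>e gchoose n\<bar> * \<bar>\<kappa>\<bar> ^ n * norm (Pn c n i) * R ^ nat \<bar>i\<bar> * \<rho> ^ n"
      unfolding f_def Bs_def by (simp add: norm_mult abs_mult power_abs norm_power)
    also have "\<dots> \<le> \<bar>e gchoose n\<bar> * \<bar>\<kappa>\<bar> ^ n * B ^ n * R ^ n * \<rho> ^ n"
      using that R r Pn_bound[of c n i] unfolding B_def
      by (intro mult_right_mono mult_left_mono mult_mono power_increasing) auto
    also have "\<dots> = \<bar>e gchoose n\<bar> * X ^ n" unfolding X_def by (simp add: power_mult_distrib)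
    finally show ?thesis .
  qed
  have gb: "g n \<le> real (2 * n + 1) * \<bar>e gchoose n\<bar> * X ^ n" for n
  proof -
    have "g n \<le> (\<Sum>i\<in>{-int n..int n}. \<bar>e gchoose n\<bar> * X ^ n)" unfolding g_def by (rule sum_mono) (rule fb)
    also have "\<dots> = real (2 * n + 1) * \<bar>e gchoose n\<bar> * X ^ n" by simp
    finally show ?thesis .
  qed
  have gn: "g n \<ge> 0" for n unfolding g_def by (intro sum_nonneg fn)
  have "summable g"
    by (rule summable_comparison_test[OF _ binom_abs_summable(2)[OF X, of e]]) (use gb gn in auto)
  then have gs: "g summable_on UNIV" using gn by (intro summable_nonneg_imp_summable_on) auto
  have "f summable_on Sigma UNIV (\<lambda>_. UNIV)"
    by (rule summable_on_SigmaI[OF _ gs]) (use inner fn in auto)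
  then show "(\<lambda>(n,i). norm (Bs e \<kappa> c n i) * R ^ nat \<bar>i\<bar> * \<rho> ^ n) summable_on UNIV"
    unfolding f_def by simp
qed

lemma LE_Bs:
  assumes cond: "d * \<bar>\<kappa>\<bar> * (2 + 2 * \<bar>c\<bar>) * R < 1" and R: "R \<ge> 1"
    and t: "\<bar>t\<bar> < d" and z: "norm z = 1"
  shows "LE (Ev (Bs e \<kappa> c) t) z = complex_of_real ((1 + \<kappa> * t * (2 * Re z - 2 * c)) powr e)"
    and "\<bar>\<kappa> * t * (2 * Re z - 2 * c)\<bar> < 1"
proof -
  define p where "p = 2 * Re z - 2 * c"
  define y where "y = \<kappa> * t * p"
  have z0: "z \<noteq> 0" using z by auto
  have zc: "z * cnj z = 1" using complex_norm_square[of z] z by simp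
  have inv: "inverse z = cnj z" using inverse_unique[OF zc] .
  have zp: "z + inverse z - 2 * complex_of_real c = complex_of_real p"
    unfolding inv p_def by (simp add: complex_add_cnj)
  have pb: "\<bar>p\<bar> \<le> 2 + 2 * \<bar>c\<bar>" unfolding p_def using abs_Re_le_cmod[of z] z by auto
  have "\<bar>y\<bar> = \<bar>\<kappa>\<bar> * \<bar>t\<bar> * \<bar>p\<bar>" unfolding y_def by (simp add: abs_mult)
  also have "\<dots> \<le> \<bar>\<kappa>\<bar> * d * ((2 + 2 * \<bar>c\<bar>) * R)"
  proof -
    have "(2 + 2 * \<bar>c\<bar>) * 1 \<le> (2 + 2 * \<bar>c\<bar>) * R" using R by (intro mult_left_mono) auto
    then have pR: "\<bar>p\<bar> \<le> (2 + 2 * \<bar>c\<bar>) * R" using pb by simp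
    show ?thesis using t pR by (intro mult_mono mult_left_mono) auto
  qed
  also have "\<dots> = d * \<bar>\<kappa>\<bar> * (2 + 2 * \<bar>c\<bar>) * R" by (simp add: mult_ac)
  also have "\<dots> < 1" by (rule cond)
  finally have y: "\<bar>y\<bar> < 1" .
  then show "\<bar>\<kappa> * t * (2 * Re z - 2 * c)\<bar> < 1" unfolding y_def p_def .
  have trm: "complex_of_real t ^ n * LE (Bs e \<kappa> c n) z = complex_of_real ((e gchoose n) * y ^ n)" for n
    unfolding Bs_def LE_scale LE_Pn[OF z0] zp y_def by (simp add: power_mult_distrib mult_ac)
  have "summable (\<lambda>n. \<bar>e gchoose n\<bar> * \<bar>y\<bar> ^ n)" using binom_abs_summable(1)[of "\<bar>y\<bar>"] y by auto
  then have "(\<lambda>n. norm (complex_of_real ((e gchoose n) * y ^ n))) summable_on UNIV"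
    by (intro norm_summable_imp_summable_on) (auto simp: abs_mult power_abs norm_mult norm_power)
  then have ss: "(\<lambda>n. complex_of_real ((e gchoose n) * y ^ n)) summable_on UNIV" by (rule abs_summable_summable)
  have "LE (Ev (Bs e \<kappa> c) t) z = (\<Sum>\<^sub>\<infinity>n. complex_of_real ((e gchoose n) * y ^ n))"
    unfolding LE_swap[OF Good_Bs[OF cond R] R t z] trm ..
  also have "\<dots> = suminf (\<lambda>n. complex_of_real ((e gchoose n) * y ^ n))" by (rule infsum_eq_suminf'[OF ss])
  also have "\<dots> = complex_of_real ((1 + y) powr e)"
  proof -
    have "(\<lambda>n. complex_of_real ((e gchoose n) * y ^ n)) sums complex_of_real ((1 + y) powr e)"
      using gen_binomial_real[OF y, of e] by (simp only: sums_of_real_iff)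
    then show ?thesis by (rule sums_unique[symmetric])
  qed
  finally show "LE (Ev (Bs e \<kappa> c) t) z = complex_of_real ((1 + \<kappa> * t * (2 * Re z - 2 * c)) powr e)"
    unfolding y_def p_def .
qed

lemma matrix_inv_eqI:
  fixes A B :: "'a::comm_ring_1^'n^'n"
  assumes "A ** B = mat 1" "B ** A = mat 1"
  shows "matrix_inv A = B"
proof -
  have ex: "\<exists>A'. A ** A' = mat 1 \<and> A' ** A = mat 1" using assms by blast
  define M where "M = matrix_inv A"
  have M: "A ** M = mat 1 \<and> M ** A = mat 1" unfolding M_def matrix_inv_def by (rule someI_ex[OF ex])
  have "M = M ** (A ** B)" using assms by (simp add: matrix_mul_rid)
  also have "\<dots> = (M ** A) ** B" by (simp add: matrix_mul_assoc)
  also have "\<dots> = B" using M by (simp add: matrix_mul_lid)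
  finally show ?thesis unfolding M_def .
qed

lemma mat_alg:
  fixes w :: complex and k \<nu> \<mu> :: real and H D :: mat2
  assumes k: "k^2 = 1/2" and nm: "\<nu> * \<mu> = 1" and w: "w * cnj w = complex_of_real (\<mu>^2)"
    and H: "H$1$1 = - of_real k" "H$1$2 = of_real k * of_real \<nu> * cnj w" "H$2$1 = - (of_real k * of_real \<nu> * w)" "H$2$2 = - of_real k"
    and D: "D$1$1 = of_real \<mu>" "D$1$2 = 0" "D$2$1 = 0" "D$2$2 = - of_real \<mu>"
  shows "H \<in> SU2" "(\<chi> a b. \<i> * D $ a $ b) \<in> su2" "is_diagonal D"
    "H ** D ** matrix_inv H = (\<chi> a b. if a = 1 \<and> b = 2 then cnj w else if a = 2 \<and> b = 1 then w else 0)"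
proof -
  have k2: "complex_of_real k * complex_of_real k = 1/2" using k by (metis of_real_mult power2_eq_square of_real_divide of_real_1 of_real_numeral)
  have nm2: "complex_of_real \<nu> * complex_of_real \<mu> = 1" using nm by (metis of_real_1 of_real_mult)
  have ww: "w * cnj w = complex_of_real \<mu> * complex_of_real \<mu>" using w by (simp add: power2_eq_square)
  have key: "complex_of_real k * complex_of_real k * (complex_of_real \<nu> * complex_of_real \<nu>) * (w * cnj w) = 1/2"
    using k2 nm2 ww by algebra
  have cw: "cnj (complex_of_real x) = complex_of_real x" for x by simp
  have AH: "adjoint2 H = (\<chi> a b. if a = 1 \<and> b = 1 then - of_real k else if a = 1 \<and> b = 2 then - (of_real k * of_real \<nu> * cnj w)
      else if a = 2 \<and> b = 1 then of_real k * of_real \<nu> * w else - of_real k)"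
    unfolding adjoint2_def by (simp add: vec_eq_iff forall_2 H)
  have HH: "H ** adjoint2 H = mat 1"
    unfolding AH matrix_matrix_mult_def mat_def
    by (simp add: vec_eq_iff forall_2 sum_2 H; intro conjI; use k2 nm2 ww in algebra)
  have HH2: "adjoint2 H ** H = mat 1"
    unfolding AH matrix_matrix_mult_def mat_def
    by (simp add: vec_eq_iff forall_2 sum_2 H; intro conjI; use k2 nm2 ww in algebra)
  have dH: "det H = 1"
    unfolding det_2 H using k2 nm2 ww by algebra
  show "H \<in> SU2" unfolding SU2_def using HH dH by simp
  show "(\<chi> a b. \<i> * D $ a $ b) \<in> su2" unfolding su2_def adjoint2_def trace_def
    by (simp add: vec_eq_iff forall_2 sum_2 D)
  show "is_diagonal D" unfolding is_diagonal_def using D by (auto simp: forall_2)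
  have inv: "matrix_inv H = adjoint2 H" by (rule matrix_inv_eqI[OF HH HH2])
  show "H ** D ** matrix_inv H = (\<chi> a b. if a = 1 \<and> b = 2 then cnj w else if a = 2 \<and> b = 1 then w else 0)"
  proof -
    have f1: "complex_of_real \<nu> * (cnj w * (complex_of_real \<nu> * w)) = 1" using nm2 ww by algebra
    have f2: "complex_of_real \<nu> * (w * (complex_of_real \<nu> * cnj w)) = 1" using nm2 ww by algebra
    have f3: "2 * (complex_of_real \<mu> * (complex_of_real \<nu> * (complex_of_real k * complex_of_real k))) = 1"
      using nm2 k2 by algebra
    show ?thesis
      unfolding inv AH matrix_matrix_mult_def
      apply (simp add: vec_eq_iff forall_2 sum_2 H D)
      apply (intro conjI)
      apply (simp_all add: f1 f2 f3)
      done
  qed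
qed

definition rser :: "real \<Rightarrow> real \<Rightarrow> real \<Rightarrow> real \<Rightarrow> nat \<Rightarrow> real" where
  "rser \<beta> \<gamma> \<sigma> \<epsilon> k = (1/4) * ((1/2) gchoose k) * (\<beta> ^ k + \<epsilon> * \<sigma> * \<gamma> ^ k)"

lemma rser_sums:
  assumes b: "\<bar>\<beta> * t\<bar> < 1" and g: "\<bar>\<gamma> * t\<bar> < 1"
  shows "(\<lambda>k. rser \<beta> \<gamma> \<sigma> \<epsilon> k * t ^ k) sums ((1/4) * (sqrt (1 + \<beta> * t) + \<epsilon> * \<sigma> * sqrt (1 + \<gamma> * t)))"
proof -
  have P: "(\<lambda>k. ((1/2) gchoose k) * (\<beta> * t) ^ k) sums sqrt (1 + \<beta> * t)"
    using gen_binomial_real[OF b, of "1/2"] b by (simp add: powr_half_sqrt)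
  have Q: "(\<lambda>k. ((1/2) gchoose k) * (\<gamma> * t) ^ k) sums sqrt (1 + \<gamma> * t)"
    using gen_binomial_real[OF g, of "1/2"] g by (simp add: powr_half_sqrt)
  have "(\<lambda>k. (1/4) * (((1/2) gchoose k) * (\<beta> * t) ^ k + \<epsilon> * \<sigma> * (((1/2) gchoose k) * (\<gamma> * t) ^ k)))
     sums ((1/4) * (sqrt (1 + \<beta> * t) + \<epsilon> * \<sigma> * sqrt (1 + \<gamma> * t)))"
    by (intro sums_mult sums_add P Q)
  moreover have "(\<lambda>k. rser \<beta> \<gamma> \<sigma> \<epsilon> k * t ^ k) = (\<lambda>k. (1/4) * (((1/2) gchoose k) * (\<beta> * t) ^ k + \<epsilon> * \<sigma> * (((1/2) gchoose k) * (\<gamma> * t) ^ k)))"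
    by (rule ext) (simp add: rser_def power_mult_distrib algebra_simps)
  ultimately show ?thesis by simp
qed

lemma rser_abs_summable:
  assumes "0 \<le> \<rho>" "\<bar>\<beta>\<bar> * \<rho> < 1" "\<bar>\<gamma>\<bar> * \<rho> < 1" "\<bar>\<sigma>\<bar> = 1" "\<bar>\<epsilon>\<bar> = 1"
  shows "summable (\<lambda>k. \<bar>rser \<beta> \<gamma> \<sigma> \<epsilon> k\<bar> * \<rho> ^ k)"
proof -
  have s: "summable (\<lambda>k. (1/4) * (\<bar>(1/2) gchoose k\<bar> * (\<bar>\<beta>\<bar> * \<rho>) ^ k + \<bar>(1/2) gchoose k\<bar> * (\<bar>\<gamma>\<bar> * \<rho>) ^ k))"
    using assms by (intro summable_mult summable_add binom_abs_summable(1)) auto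
  show ?thesis
  proof (rule summable_comparison_test[OF _ s], intro exI[of _ 0] allI impI)
    fix k :: nat
    have "\<bar>\<beta> ^ k + \<epsilon> * \<sigma> * \<gamma> ^ k\<bar> \<le> \<bar>\<beta>\<bar> ^ k + \<bar>\<gamma>\<bar> ^ k"
      using assms by (simp add: abs_mult power_abs abs_triangle_ineq[THEN order_trans])
    then have "\<bar>rser \<beta> \<gamma> \<sigma> \<epsilon> k\<bar> \<le> (1/4) * \<bar>(1/2) gchoose k\<bar> * (\<bar>\<beta>\<bar> ^ k + \<bar>\<gamma>\<bar> ^ k)"
      unfolding rser_def by (simp add: abs_mult mult_left_mono)
    then have "\<bar>rser \<beta> \<gamma> \<sigma> \<epsilon> k\<bar> * \<rho> ^ k \<le> (1/4) * \<bar>(1/2) gchoose k\<bar> * (\<bar>\<beta>\<bar> ^ k + \<bar>\<gamma>\<bar> ^ k) * \<rho> ^ k"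
      using assms by (intro mult_right_mono) auto
    then show "norm (\<bar>rser \<beta> \<gamma> \<sigma> \<epsilon> k\<bar> * \<rho> ^ k) \<le> (1/4) * (\<bar>(1/2) gchoose k\<bar> * (\<bar>\<beta>\<bar> * \<rho>) ^ k + \<bar>(1/2) gchoose k\<bar> * (\<bar>\<gamma>\<bar> * \<rho>) ^ k)"
      using assms by (simp add: power_mult_distrib algebra_simps)
  qed
qed

lemma rs_explicit:
  fixes r s t sh c \<sigma> :: real
  assumes sh: "sh > 0" and eq1: "r^2 + s^2 + 2 * r * s * c = 1/4" and eq2: "4 * r * s * sh = t"
    and pos: "r + s > 0" and sg: "\<sigma> = 1 \<or> \<sigma> = -1" and sgn: "\<sigma> * (r - s) > 0"
  shows "r = (1/4) * (sqrt (1 + (2*(1-c)/sh) * t) + 1 * \<sigma> * sqrt (1 + (-2*(1+c)/sh) * t))"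
    and "s = (1/4) * (sqrt (1 + (2*(1-c)/sh) * t) + (-1) * \<sigma> * sqrt (1 + (-2*(1+c)/sh) * t))"
proof -
  have bt: "(2*(1-c)/sh) * t = 8 * r * s * (1-c)" using sh by (simp add: eq2[symmetric] field_simps)
  have gt: "(-2*(1+c)/sh) * t = -8 * r * s * (1+c)" using sh by (simp add: eq2[symmetric] field_simps)
  have p2: "(r + s)^2 = (1/4) * (1 + (2*(1-c)/sh) * t)" unfolding bt using eq1 by (simp add: power2_eq_square algebra_simps)
  have m2: "(r - s)^2 = (1/4) * (1 + (-2*(1+c)/sh) * t)" unfolding gt using eq1 by (simp add: power2_eq_square algebra_simps)
  have P: "r + s = (1/2) * sqrt (1 + (2*(1-c)/sh) * t)"
  proof -
    have "sqrt ((r + s)^2) = r + s" using pos by simp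
    then show ?thesis unfolding p2 by (simp add: real_sqrt_mult real_sqrt_divide)
  qed
  have Q: "r - s = \<sigma> * ((1/2) * sqrt (1 + (-2*(1+c)/sh) * t))"
  proof -
    have "sqrt ((r - s)^2) = \<bar>r - s\<bar>" by simp
    then have "\<bar>r - s\<bar> = (1/2) * sqrt (1 + (-2*(1+c)/sh) * t)" unfolding m2 by (simp add: real_sqrt_mult real_sqrt_divide)
    moreover have "r - s = \<sigma> * \<bar>r - s\<bar>" using sg sgn by (auto simp: abs_if mult_less_0_iff)
    ultimately show ?thesis by (metis mult.left_commute)
  qed
  show "r = (1/4) * (sqrt (1 + (2*(1-c)/sh) * t) + 1 * \<sigma> * sqrt (1 + (-2*(1+c)/sh) * t))"
    using P Q by (simp add: algebra_simps)
  show "s = (1/4) * (sqrt (1 + (2*(1-c)/sh) * t) + (-1) * \<sigma> * sqrt (1 + (-2*(1+c)/sh) * t))"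
    using P Q by (simp add: algebra_simps)
qed

lemma LE_Cst: "LE (Ev (Cst v) t) z = v"
proof -
  have "((\<lambda>i. (if i = 0 then v else 0) * z powi i) has_sum v) UNIV"
    by (rule has_sum_finite_neutralI[where B="{0}"]) auto
  then show ?thesis unfolding LE_def Ev_Cst by (rule infsumI)
qed

lemma LE_Ev_lin:
  assumes "Good R C1 d" "Good R C2 d" "R \<ge> 1" "\<bar>t\<bar> < d" "norm z = 1"
  shows "LE (\<lambda>i. a * Ev C1 t i + b * Ev C2 t i) z = a * LE (Ev C1 t) z + b * LE (Ev C2 t) z"
proof -
  have s1: "(\<lambda>i. a * (Ev C1 t i * z powi i)) summable_on UNIV"
    by (intro summable_on_cmult_right LE_summable[OF assms(1,3,4,5)])
  have s2: "(\<lambda>i. b * (Ev C2 t i * z powi i)) summable_on UNIV"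
    by (intro summable_on_cmult_right LE_summable[OF assms(2,3,4,5)])
  have "LE (\<lambda>i. a * Ev C1 t i + b * Ev C2 t i) z = (\<Sum>\<^sub>\<infinity>i. a * (Ev C1 t i * z powi i) + b * (Ev C2 t i * z powi i))"
    unfolding LE_def by (simp add: algebra_simps)
  also have "\<dots> = (\<Sum>\<^sub>\<infinity>i. a * (Ev C1 t i * z powi i)) + (\<Sum>\<^sub>\<infinity>i. b * (Ev C2 t i * z powi i))"
    by (rule infsum_add[OF s1 s2])
  also have "\<dots> = a * LE (Ev C1 t) z + b * LE (Ev C2 t) z"
    unfolding LE_def by (simp add: infsum_cmult_right')
  finally show ?thesis .
qed

theorem proposition2:
  fixes H q \<rho> T :: real and r s :: "real \<Rightarrow> real"
  assumes "H > 1" and "q = arcoth H"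
    and "\<rho> > exp q"
    and "0 < T" and "T < Tmax q"
    and "delaunay_residue_family q r s"
  shows "\<exists>R T'. exp q < R \<and> R < \<rho> \<and> 0 < T' \<and> T' < T \<and>
    (\<exists>Hl Dl :: real \<Rightarrow> loop.
       (\<forall>t\<in>{-T'<..<T'}.
          Hl t \<in> LambdaSU2 R \<and>
          (\<lambda>i. \<chi> a b. \<i> * (Dl t i $ a $ b)) \<in> Lambdasu2 R \<and>
          (\<forall>z. cmod z = 1 \<longrightarrow>
             is_diagonal (loop_eval (Dl t) z) \<and>
             A_rs (r t) (s t) z = loop_eval (Hl t) z ** loop_eval (Dl t) z ** matrix_inv (loop_eval (Hl t) z))) \<and>
       loop_smooth_on R {-T'<..<T'} Hl \<and> loop_smooth_on R {-T'<..<T'} Dl)"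
proof -
  have q0: "q > 0"
  proof -
    have "(H + 1) / (H - 1) > 1" using assms(1) by (simp add: field_simps)
    then have "ln ((H + 1) / (H - 1)) > 0" by simp
    then show ?thesis using assms(2) unfolding arcoth_def by simp
  qed
  define sh where "sh = sinh q"
  define c where "c = cosh q"
  have sh0: "sh > 0" unfolding sh_def using q0 by simp
  have c1: "c \<ge> 1" unfolding c_def by (rule cosh_real_ge_1)
  have Tm: "0 < Tmax q" using assms(4,5) by simp
  from assms(6) have contr: "continuous_on {..<Tmax q} r" and conts: "continuous_on {..<Tmax q} s"
    and eqs: "\<And>t. t < Tmax q \<Longrightarrow> (r t)\<^sup>2 + (s t)\<^sup>2 + 2 * r t * s t * cosh q = 1/4 \<and> 4 * r t * s t * sinh q = t"
    and fam: "(r 0 = 1/2 \<and> s 0 = 0 \<and> (\<forall>t < Tmax q. r t > s t)) \<or> (r 0 = 0 \<and> s 0 = 1/2 \<and> (\<forall>t < Tmax q. r t < s t))"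
    unfolding delaunay_residue_family_def by auto
  obtain \<sigma> :: real where sg: "\<sigma> = 1 \<or> \<sigma> = -1" and sgn: "\<And>t. t < Tmax q \<Longrightarrow> \<sigma> * (r t - s t) > 0"
    and rs0: "r 0 + s 0 = 1/2"
  proof (cases "r 0 = 1/2 \<and> s 0 = 0 \<and> (\<forall>t < Tmax q. r t > s t)")
    case True
    then show ?thesis using that[of 1] by auto
  next
    case False
    then have "r 0 = 0 \<and> s 0 = 1/2 \<and> (\<forall>t < Tmax q. r t < s t)" using fam by blast
    then show ?thesis using that[of "-1"] by auto
  qed
  have "isCont (\<lambda>t. r t + s t) 0"
  proof -
    have "continuous_on {..<Tmax q} (\<lambda>t. r t + s t)" using contr conts by (intro continuous_on_add)
    moreover have "interior {..<Tmax q} = {..<Tmax q}" by (rule interior_open) simp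
    then have "0 \<in> interior {..<Tmax q}" using Tm by simp
    ultimately show ?thesis using continuous_on_interior by blast
  qed
  then have lim: "(\<lambda>t. r t + s t) \<midarrow>0\<rightarrow> 1/2" using rs0 by (simp add: isCont_def)
  obtain \<delta>0 where \<delta>0: "\<delta>0 > 0" and pos0': "\<forall>t. t \<noteq> 0 \<and> \<bar>0 - t\<bar> < \<delta>0 \<longrightarrow> 0 < r t + s t"
    using LIM_fun_gt_zero[OF lim] by auto
  have pos0: "\<And>t. t \<noteq> 0 \<Longrightarrow> \<bar>0 - t\<bar> < \<delta>0 \<Longrightarrow> 0 < r t + s t" using pos0' by blast
  have pos: "r t + s t > 0" if "\<bar>t\<bar> < \<delta>0" for t using pos0[of t] that rs0 by (cases "t = 0") auto
  define R where "R = (exp q + \<rho>) / 2"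
  have R: "exp q < R" "R < \<rho>" using assms(3) unfolding R_def by auto
  have "1 < exp q" using q0 by simp
  then have R1: "R \<ge> 1" using R(1) by linarith
  define \<kappa> where "\<kappa> = 1 / sh"
  define \<beta> where "\<beta> = 2*(1-c)/sh"
  define \<gamma> where "\<gamma> = -2*(1+c)/sh"
  define M where "M = \<bar>\<kappa>\<bar> * (2 + 2 * \<bar>c\<bar>) * R + \<bar>\<beta>\<bar> + \<bar>\<gamma>\<bar> + 1"
  define d where "d = 1 / (2 * M)"
  have M1: "M \<ge> 1" unfolding M_def using R1 by (simp add: mult_nonneg_nonneg)
  have d0: "d > 0" unfolding d_def using M1 by simp
  have dM: "d * M = 1/2" unfolding d_def using M1 by simp
  have dle: "d * X < 1" if "0 \<le> X" "X \<le> M" for X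
  proof -
    have "d * X \<le> d * M" using that d0 by (intro mult_left_mono) auto
    then show ?thesis using dM by simp
  qed
  have cond: "d * \<bar>\<kappa>\<bar> * (2 + 2 * \<bar>c\<bar>) * R < 1"
    using dle[of "\<bar>\<kappa>\<bar> * (2 + 2 * \<bar>c\<bar>) * R"] R1 unfolding M_def by (simp add: mult_ac)
  have d\<beta>: "d * \<bar>\<beta>\<bar> < 1" using dle[of "\<bar>\<beta>\<bar>"] R1 unfolding M_def by (simp add: mult_nonneg_nonneg)
  have d\<gamma>: "d * \<bar>\<gamma>\<bar> < 1" using dle[of "\<bar>\<gamma>\<bar>"] R1 unfolding M_def by (simp add: mult_nonneg_nonneg)
  define T' where "T' = min (T/2) (min d \<delta>0)"
  have T': "0 < T'" "T' < T" "T' \<le> d" unfolding T'_def using assms(4) d0 \<delta>0 by auto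
  define kk :: complex where "kk = complex_of_real (1 / sqrt 2)"
  define Dc where "Dc = (\<lambda>n i. (1/2 :: complex) * Bs (1/2) \<kappa> c n i)"
  define G where "G = (\<lambda>n i. (2 :: complex) * Bs (-1/2) \<kappa> c n i)"
  define \<rho>s where "\<rho>s = rser \<beta> \<gamma> \<sigma> 1"
  define \<sigma>s where "\<sigma>s = rser \<beta> \<gamma> \<sigma> (-1)"
  define Gp where "Gp = (\<lambda>n i. G n (i + 1))"
  define Gm where "Gm = (\<lambda>n i. G n (i + -1))"
  define H12 where "H12 = (\<lambda>n i. kk * (cp \<rho>s Gp n i + cp \<sigma>s G n i))"
  define H21 where "H21 = (\<lambda>n i. (-kk) * (cp \<rho>s Gm n i + cp \<sigma>s G n i))"
  define EH where "EH = (\<lambda>(a::2) (b::2). if a = 1 then (if b = 1 then Cst (-kk) else H12) else (if b = 1 then H21 else Cst (-kk)))"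
  define ED where "ED = (\<lambda>(a::2) (b::2). if a = 1 then (if b = 1 then Dc else Cst 0) else (if b = 1 then Cst 0 else (\<lambda>n i. -1 * Dc n i)))"
  define EiD where "EiD = (\<lambda>a b n i. \<i> * ED a b n i)"
  have GBp: "Good R (Bs (1/2) \<kappa> c) d" by (rule Good_Bs[OF cond R1])
  have GBm: "Good R (Bs (-1/2) \<kappa> c) d" by (rule Good_Bs[OF cond R1])
  have GDc: "Good R Dc d" unfolding Dc_def by (rule Good_scale[OF GBp])
  have GDc': "Good R (\<lambda>n i. -1 * Dc n i) d" by (rule Good_scale[OF GDc])
  have GG: "Good R G d" unfolding G_def by (rule Good_scale[OF GBm])
  have GGp: "Good R Gp d" unfolding Gp_def by (rule Good_shift[OF GG R1]) simp
  have GGm: "Good R Gm d" unfolding Gm_def by (rule Good_shift[OF GG R1]) simp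
  have hbx: "summable (\<lambda>k. \<bar>rser \<beta> \<gamma> \<sigma> \<epsilon> k\<bar> * \<rho>' ^ k)" if "0 \<le> \<rho>'" "\<rho>' < d" "\<bar>\<epsilon>\<bar> = 1" for \<rho>' \<epsilon>
  proof (rule rser_abs_summable)
    have "\<bar>\<beta>\<bar> * \<rho>' \<le> \<bar>\<beta>\<bar> * d" using that by (intro mult_left_mono) auto
    then show "\<bar>\<beta>\<bar> * \<rho>' < 1" using d\<beta> by (simp add: mult_ac)
    have "\<bar>\<gamma>\<bar> * \<rho>' \<le> \<bar>\<gamma>\<bar> * d" using that by (intro mult_left_mono) auto
    then show "\<bar>\<gamma>\<bar> * \<rho>' < 1" using d\<gamma> by (simp add: mult_ac)
  qed (use that sg in auto)
  have hbr: "\<And>\<rho>'. 0 \<le> \<rho>' \<Longrightarrow> \<rho>' < d \<Longrightarrow> summable (\<lambda>k. \<bar>\<rho>s k\<bar> * \<rho>' ^ k)"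
    unfolding \<rho>s_def using hbx by simp
  have hbs: "\<And>\<rho>'. 0 \<le> \<rho>' \<Longrightarrow> \<rho>' < d \<Longrightarrow> summable (\<lambda>k. \<bar>\<sigma>s k\<bar> * \<rho>' ^ k)"
    unfolding \<sigma>s_def using hbx by simp
  have R0: "R \<ge> 0" using R1 by simp
  have Gc1: "Good R (cp \<rho>s Gp) d" by (rule Good_cp[OF hbr GGp R0])
  have Gc2: "Good R (cp \<sigma>s G) d" by (rule Good_cp[OF hbs GG R0])
  have Gc3: "Good R (cp \<rho>s Gm) d" by (rule Good_cp[OF hbr GGm R0])
  have GH12: "Good R H12 d" unfolding H12_def by (rule Good_scale[OF Good_add[OF Gc1 Gc2 R0]])
  have GH21: "Good R H21 d" unfolding H21_def by (rule Good_scale[OF Good_add[OF Gc3 Gc2 R0]])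
  have GEH: "Good R (EH a b) d" for a b unfolding EH_def using GH12 GH21 Good_Cst by auto
  have GED: "Good R (ED a b) d" for a b unfolding ED_def using GDc GDc' Good_Cst by auto
  have GEiD: "Good R (EiD a b) d" for a b unfolding EiD_def by (rule Good_scale[OF GED])
  have smH: "loop_smooth_on R {-T'<..<T'} (MEv EH)" by (rule MEv_smooth[OF GEH R1 T'(3)])
  have smD: "loop_smooth_on R {-T'<..<T'} (MEv ED)" by (rule MEv_smooth[OF GED R1 T'(3)])
  have pt: "MEv EH t \<in> LambdaSU2 R \<and> (\<lambda>i. \<chi> a b. \<i> * (MEv ED t i $ a $ b)) \<in> Lambdasu2 R \<and>
      (\<forall>z. cmod z = 1 \<longrightarrow> is_diagonal (loop_eval (MEv ED t) z) \<and>
         A_rs (r t) (s t) z = loop_eval (MEv EH t) z ** loop_eval (MEv ED t) z ** matrix_inv (loop_eval (MEv EH t) z))"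
    if tI: "t \<in> {-T'<..<T'}" for t
  proof -
    have td: "\<bar>t\<bar> < d" using tI T' by auto
    have t\<delta>: "\<bar>t\<bar> < \<delta>0" using tI unfolding T'_def by auto
    have tT: "t < Tmax q" using tI T' assms(5) by auto
    from eqs[OF tT] have e1: "(r t)^2 + (s t)^2 + 2 * r t * s t * c = 1/4" and e2: "4 * r t * s t * sh = t"
      unfolding c_def sh_def by auto
    note rsx = rs_explicit[OF sh0 e1 e2 pos[OF t\<delta>] sg sgn[OF tT]]
    have bt: "\<bar>\<beta> * t\<bar> < 1"
    proof -
      have "\<bar>\<beta> * t\<bar> \<le> \<bar>\<beta>\<bar> * d" unfolding abs_mult using td by (intro mult_left_mono) auto
      then show ?thesis using d\<beta> by (simp add: mult_ac)
    qed
    have gt: "\<bar>\<gamma> * t\<bar> < 1"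
    proof -
      have "\<bar>\<gamma> * t\<bar> \<le> \<bar>\<gamma>\<bar> * d" unfolding abs_mult using td by (intro mult_left_mono) auto
      then show ?thesis using d\<gamma> by (simp add: mult_ac)
    qed
    have rsum: "(\<lambda>k. \<rho>s k * t ^ k) sums r t"
    proof -
      have eq: "r t = (1/4) * (sqrt (1 + \<beta> * t) + 1 * \<sigma> * sqrt (1 + \<gamma> * t))"
        using rsx(1) unfolding \<beta>_def \<gamma>_def .
      have X: "(\<lambda>k. rser \<beta> \<gamma> \<sigma> 1 k * t ^ k) sums ((1/4) * (sqrt (1 + \<beta> * t) + 1 * \<sigma> * sqrt (1 + \<gamma> * t)))"
        by (rule rser_sums[OF bt gt])
      show ?thesis using X unfolding eq[symmetric] \<rho>s_def .
    qed
    have ssum: "(\<lambda>k. \<sigma>s k * t ^ k) sums s t"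
    proof -
      have eq: "s t = (1/4) * (sqrt (1 + \<beta> * t) + (-1) * \<sigma> * sqrt (1 + \<gamma> * t))"
        using rsx(2) unfolding \<beta>_def \<gamma>_def .
      have X: "(\<lambda>k. rser \<beta> \<gamma> \<sigma> (-1) k * t ^ k) sums ((1/4) * (sqrt (1 + \<beta> * t) + (-1) * \<sigma> * sqrt (1 + \<gamma> * t)))"
        by (rule rser_sums[OF bt gt])
      show ?thesis using X unfolding eq[symmetric] \<sigma>s_def .
    qed
    have EvH12: "Ev H12 t = (\<lambda>i. kk * (complex_of_real (r t) * Ev Gp t i + complex_of_real (s t) * Ev G t i))"
    proof
      fix i
      have "Ev H12 t i = kk * Ev (\<lambda>n i. cp \<rho>s Gp n i + cp \<sigma>s G n i) t i" unfolding H12_def by (rule Ev_scale)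
      also have "\<dots> = kk * (Ev (cp \<rho>s Gp) t i + Ev (cp \<sigma>s G) t i)" by (simp add: Ev_add[OF Gc1 Gc2 R1 td])
      also have "\<dots> = kk * (complex_of_real (r t) * Ev Gp t i + complex_of_real (s t) * Ev G t i)"
        by (simp add: Ev_cp[OF hbr GGp R1 td rsum] Ev_cp[OF hbs GG R1 td ssum])
      finally show "Ev H12 t i = kk * (complex_of_real (r t) * Ev Gp t i + complex_of_real (s t) * Ev G t i)" .
    qed
    have EvH21: "Ev H21 t = (\<lambda>i. (-kk) * (complex_of_real (r t) * Ev Gm t i + complex_of_real (s t) * Ev G t i))"
    proof
      fix i
      have "Ev H21 t i = (-kk) * Ev (\<lambda>n i. cp \<rho>s Gm n i + cp \<sigma>s G n i) t i" unfolding H21_def by (rule Ev_scale)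
      also have "\<dots> = (-kk) * (Ev (cp \<rho>s Gm) t i + Ev (cp \<sigma>s G) t i)" by (simp add: Ev_add[OF Gc3 Gc2 R1 td])
      also have "\<dots> = (-kk) * (complex_of_real (r t) * Ev Gm t i + complex_of_real (s t) * Ev G t i)"
        by (simp add: Ev_cp[OF hbr GGm R1 td rsum] Ev_cp[OF hbs GG R1 td ssum])
      finally show "Ev H21 t i = (-kk) * (complex_of_real (r t) * Ev Gm t i + complex_of_real (s t) * Ev G t i)" .
    qed
    have main_z: "loop_eval (MEv EH t) z \<in> SU2 \<and> (\<chi> a b. \<i> * loop_eval (MEv ED t) z $ a $ b) \<in> su2 \<and>
        is_diagonal (loop_eval (MEv ED t) z) \<and>
        A_rs (r t) (s t) z = loop_eval (MEv EH t) z ** loop_eval (MEv ED t) z ** matrix_inv (loop_eval (MEv EH t) z)"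
      if z: "cmod z = 1" for z
    proof -
      define y where "y = \<kappa> * t * (2 * Re z - 2 * c)"
      have LBp: "LE (Ev (Bs (1/2) \<kappa> c) t) z = complex_of_real ((1 + y) powr (1/2))"
        using LE_Bs(1)[OF cond R1 td z, of "1/2"] unfolding y_def by simp
      have LBm: "LE (Ev (Bs (-1/2) \<kappa> c) t) z = complex_of_real ((1 + y) powr (-1/2))"
        using LE_Bs(1)[OF cond R1 td z, of "-1/2"] unfolding y_def by simp
      have y1: "\<bar>y\<bar> < 1" using LE_Bs(2)[OF cond R1 td z] unfolding y_def by simp
      define \<mu> where "\<mu> = (1/2) * (1 + y) powr (1/2)"
      define \<nu> where "\<nu> = 2 * (1 + y) powr (-1/2)"
      have z0: "z \<noteq> 0" using z by auto
      have zc: "z * cnj z = 1" using complex_norm_square[of z] z by simp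
      have inv: "inverse z = cnj z" using inverse_unique[OF zc] .
      have LDc: "LE (Ev Dc t) z = complex_of_real \<mu>"
      proof -
        have e: "Ev Dc t = (\<lambda>i. (1/2) * Ev (Bs (1/2) \<kappa> c) t i)" unfolding Dc_def by (rule ext) (rule Ev_scale)
        show ?thesis unfolding e LE_scale LBp \<mu>_def by simp
      qed
      have LDc': "LE (Ev (\<lambda>n i. -1 * Dc n i) t) z = - complex_of_real \<mu>"
      proof -
        have e: "Ev (\<lambda>n i. -1 * Dc n i) t = (\<lambda>i. (-1) * Ev Dc t i)" by (rule ext) (rule Ev_scale)
        show ?thesis unfolding e LE_scale LDc by simp
      qed
      have LG: "LE (Ev G t) z = complex_of_real \<nu>"
      proof -
        have e: "Ev G t = (\<lambda>i. 2 * Ev (Bs (-1/2) \<kappa> c) t i)" unfolding G_def by (rule ext) (rule Ev_scale)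
        show ?thesis unfolding e LE_scale LBm \<nu>_def by simp
      qed
      have LGp: "LE (Ev Gp t) z = inverse z * complex_of_real \<nu>"
      proof -
        have "Ev Gp t = (\<lambda>i. Ev G t (i + 1))" unfolding Gp_def Ev_def ..
        then show ?thesis using LE_shift[OF z0, of "Ev G t" 1] LG by (simp add: power_int_minus)
      qed
      have LGm: "LE (Ev Gm t) z = z * complex_of_real \<nu>"
      proof -
        have "Ev Gm t = (\<lambda>i. Ev G t (i + -1))" unfolding Gm_def Ev_def ..
        then show ?thesis using LE_shift[OF z0, of "Ev G t" "-1"] LG by simp
      qed
      have LH12: "LE (Ev H12 t) z = kk * (complex_of_real (r t) * (inverse z * complex_of_real \<nu>) + complex_of_real (s t) * complex_of_real \<nu>)"
        unfolding EvH12 LE_scale LE_Ev_lin[OF GGp GG R1 td z] LGp LG ..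
      have LH21: "LE (Ev H21 t) z = (-kk) * (complex_of_real (r t) * (z * complex_of_real \<nu>) + complex_of_real (s t) * complex_of_real \<nu>)"
      proof -
        have "LE (Ev H21 t) z = (-kk) * LE (\<lambda>i. complex_of_real (r t) * Ev Gm t i + complex_of_real (s t) * Ev G t i) z"
          unfolding EvH21 by (rule LE_scale)
        also have "\<dots> = (-kk) * (complex_of_real (r t) * LE (Ev Gm t) z + complex_of_real (s t) * LE (Ev G t) z)"
          by (simp only: LE_Ev_lin[OF GGm GG R1 td z])
        finally show ?thesis by (simp only: LGm LG)
      qed
      define w where "w = complex_of_real (r t) * z + complex_of_real (s t)"
      have cw: "cnj w = complex_of_real (r t) * inverse z + complex_of_real (s t)" using inv by (simp add: w_def)
      define k :: real where "k = 1 / sqrt 2"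
      have k2: "k^2 = 1/2" unfolding k_def by (simp add: power_divide)
      have yp: "1 + y > 0" using y1 by simp
      have nm: "\<nu> * \<mu> = 1"
      proof -
        have "\<nu> * \<mu> = (1 + y) powr (-1/2) * (1 + y) powr (1/2)" unfolding \<nu>_def \<mu>_def by simp
        also have "\<dots> = (1 + y) powr (-1/2 + 1/2)" by (rule powr_add[symmetric])
        also have "\<dots> = 1" using yp by simp
        finally show ?thesis .
      qed
      have ww: "w * cnj w = complex_of_real (\<mu>^2)"
      proof -
        have mu2: "\<mu>^2 = (1/4) * (1 + y)"
          unfolding \<mu>_def using yp by (simp add: powr_half_sqrt power_mult_distrib power_divide)
        have kt0: "4 * r t * s t = (4 * r t * s t * sh) / sh" using sh0 by simp
        also have "\<dots> = t / sh" using e2 by simp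
        finally have kt: "\<kappa> * t = 4 * r t * s t" unfolding \<kappa>_def by simp
        have zz: "(Re z)^2 + (Im z)^2 = 1" using cmod_power2[of z] z by simp
        have "w * cnj w = complex_of_real ((Re w)^2 + (Im w)^2)" by (rule complex_mult_cnj)
        also have "(Re w)^2 + (Im w)^2 = (r t * Re z + s t)^2 + (r t * Im z)^2" unfolding w_def by simp
        also have "\<dots> = (r t)^2 + (s t)^2 + 2 * r t * s t * Re z" using zz by algebra
        also have "\<dots> = \<mu>^2" unfolding mu2 y_def using e1 kt
          by (simp add: algebra_simps)
        finally show ?thesis .
      qed
      define Hm where "Hm = loop_eval (MEv EH t) z"
      define Dm where "Dm = loop_eval (MEv ED t) z"
      have Hm: "Hm$1$1 = - complex_of_real k" "Hm$1$2 = complex_of_real k * complex_of_real \<nu> * cnj w"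
           "Hm$2$1 = - (complex_of_real k * complex_of_real \<nu> * w)" "Hm$2$2 = - complex_of_real k"
      proof -
        have kkk: "kk = complex_of_real k" unfolding kk_def k_def ..
        have E: "EH 1 1 = Cst (-kk)" "EH 1 2 = H12" "EH 2 1 = H21" "EH 2 2 = Cst (-kk)" unfolding EH_def by simp_all
        show "Hm$1$1 = - complex_of_real k" unfolding Hm_def loop_eval_MEv E LE_Cst kkk ..
        show "Hm$2$2 = - complex_of_real k" unfolding Hm_def loop_eval_MEv E LE_Cst kkk ..
        show "Hm$1$2 = complex_of_real k * complex_of_real \<nu> * cnj w" unfolding Hm_def loop_eval_MEv E LH12 cw kkk
          by algebra
        show "Hm$2$1 = - (complex_of_real k * complex_of_real \<nu> * w)" unfolding Hm_def loop_eval_MEv E LH21 w_def kkk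
          by algebra
      qed
      have Dm: "Dm$1$1 = complex_of_real \<mu>" "Dm$1$2 = 0" "Dm$2$1 = 0" "Dm$2$2 = - complex_of_real \<mu>"
      proof -
        have E: "ED 1 1 = Dc" "ED 1 2 = Cst 0" "ED 2 1 = Cst 0" "ED 2 2 = (\<lambda>n i. -1 * Dc n i)" unfolding ED_def by simp_all
        show "Dm$1$1 = complex_of_real \<mu>" unfolding Dm_def loop_eval_MEv E LDc ..
        show "Dm$1$2 = 0" unfolding Dm_def loop_eval_MEv E LE_Cst ..
        show "Dm$2$1 = 0" unfolding Dm_def loop_eval_MEv E LE_Cst ..
        show "Dm$2$2 = - complex_of_real \<mu>" unfolding Dm_def loop_eval_MEv E LDc' ..
      qed
      note MA = mat_alg[OF k2 nm ww Hm Dm]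
      have A: "A_rs (r t) (s t) z = (\<chi> a b. if a = 1 \<and> b = 2 then cnj w else if a = 2 \<and> b = 1 then w else 0)"
        unfolding A_rs_def by (simp add: vec_eq_iff forall_2 cw w_def inv)
      show ?thesis using MA A unfolding Hm_def Dm_def by simp
    qed
    have iD: "(\<lambda>i. \<chi> a b. \<i> * (MEv ED t i $ a $ b)) = MEv EiD t"
      unfolding MEv_def EiD_def by (simp add: vec_eq_iff Ev_scale)
    have iDe: "loop_eval (MEv EiD t) z = (\<chi> a b. \<i> * loop_eval (MEv ED t) z $ a $ b)" for z
    proof -
      have "Ev (EiD a b) t = (\<lambda>i. \<i> * Ev (ED a b) t i)" for a b unfolding EiD_def by (rule ext) (rule Ev_scale)
      then show ?thesis by (simp add: vec_eq_iff loop_eval_MEv LE_scale)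
    qed
    show ?thesis
      unfolding LambdaSU2_def Lambdasu2_def iD
      using MEv_in_Lambda[OF GEH R1 td] MEv_in_Lambda[OF GEiD R1 td] main_z iDe by auto
  qed
  show ?thesis
    apply (rule exI[of _ R], rule exI[of _ T'])
    apply (intro conjI R T'(1,2))
    apply (rule exI[of _ "MEv EH"], rule exI[of _ "MEv ED"])
    using pt smH smD by blast
qed

end
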